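(* $BQC(MAJ_n)=\Omega(n/\log n)$.
   Context: For $x,y\in\{0,1\}^n$, $MAJ_n(x,y)=1$ iff $\sum_{i=1}^n(x_i\wedge y_i)\ge n/2$. Quantum communication model (Yao, no prior entanglement): Alice receives $x$, Bob $y$; each holds private qubits initialized to the input and $|0\rangle$; in each round one player applies a unitary to his qubits and sends one qubit; at the end a qubit is measured giving the output; cost is the number of qubits exchanged. $BQC(f)$ is the minimum cost of a protocol computing $f$ with error probability at most $1/3$ on every input. *)

theory Defs
  imports Complex_Main "HOL-Library.Landau_Symbols"
begin

text \<open>Model of Yao's quantum communication model (no prior entanglement).  A computational basis
  state is a set of indices (the qubits that are 1); a pure state is a function
  from basis states (subsets of {0..<N}) to complex amplitudes.
  At any time, qubits are owned either by Alice (set A) or by Bob ({0..<N} - A).\<close>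

type_synonym qstate = "nat set \<Rightarrow> complex"
type_synonym qop = "nat set \<Rightarrow> nat set \<Rightarrow> complex"

definition unitary_on :: "nat set \<Rightarrow> qop \<Rightarrow> bool" where
  "unitary_on S U \<longleftrightarrow>
     (\<forall>a\<in>Pow S. \<forall>a'\<in>Pow S.
        (\<Sum>c\<in>Pow S. cnj (U c a) * U c a') = (if a = a' then 1 else 0))"

text \<open>Apply U (acting on the qubits in S) tensored with the identity on the other qubits.\<close>
definition apply_op :: "nat set \<Rightarrow> qop \<Rightarrow> qstate \<Rightarrow> qstate" where
  "apply_op S U \<psi> = (\<lambda>b. \<Sum>c\<in>Pow S. U (b \<inter> S) c * \<psi> (c \<union> (b - S)))"

text \<open>A round: (speaker, unitary, sent qubit). Speaker True = Alice, False = Bob.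
  The speaker applies a unitary to all qubits he currently holds and then
  sends one of them to the other player.\<close>
type_synonym qround = "bool \<times> qop \<times> nat"

fun speaker_qubits :: "nat \<Rightarrow> bool \<Rightarrow> nat set \<Rightarrow> nat set" where
  "speaker_qubits N w A = (if w then A else {0..<N} - A)"

fun next_owner :: "bool \<Rightarrow> nat \<Rightarrow> nat set \<Rightarrow> nat set" where
  "next_owner w q A = (if w then A - {q} else A \<union> {q})"

fun valid_rounds :: "nat \<Rightarrow> qround list \<Rightarrow> nat set \<Rightarrow> bool" where
  "valid_rounds N [] A = True"
| "valid_rounds N ((w, U, q) # rs) A =
     (q \<in> speaker_qubits N w A \<and> unitary_on (speaker_qubits N w A) U
      \<and> valid_rounds N rs (next_owner w q A))"

fun exec_rounds :: "nat \<Rightarrow> qround list \<Rightarrow> nat set \<Rightarrow> qstate \<Rightarrow> qstate" where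
  "exec_rounds N [] A \<psi> = \<psi>"
| "exec_rounds N ((w, U, q) # rs) A \<psi> =
     exec_rounds N rs (next_owner w q A) (apply_op (speaker_qubits N w A) U \<psi>)"

text \<open>A protocol for inputs of length n: N total qubits; Alice initially holds
  the set A0 containing her input qubits 0..<n (the rest of A0 are her ancillas
  in state |0>); Bob holds the complement, containing his input qubits n..<2n
  (the rest are his ancillas in state |0>); a list of rounds; an output qubit.\<close>
record qprotocol =
  nqubits :: nat
  alice_init :: "nat set"
  rounds :: "qround list"
  out_qubit :: nat

definition init_state :: "nat \<Rightarrow> (nat \<Rightarrow> bool) \<Rightarrow> (nat \<Rightarrow> bool) \<Rightarrow> qstate" where
  "init_state n x y =
     (\<lambda>b. if b = {i. i < n \<and> x i} \<union> {n + i |i. i < n \<and> y i} then 1 else 0)"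

definition wf_protocol :: "nat \<Rightarrow> qprotocol \<Rightarrow> bool" where
  "wf_protocol n P \<longleftrightarrow>
     2 * n \<le> nqubits P \<and> alice_init P \<subseteq> {0..<nqubits P}
     \<and> {0..<n} \<subseteq> alice_init P \<and> {n..<2*n} \<inter> alice_init P = {}
     \<and> out_qubit P < nqubits P
     \<and> valid_rounds (nqubits P) (rounds P) (alice_init P)"

definition final_state :: "nat \<Rightarrow> qprotocol \<Rightarrow> (nat \<Rightarrow> bool) \<Rightarrow> (nat \<Rightarrow> bool) \<Rightarrow> qstate" where
  "final_state n P x y =
     exec_rounds (nqubits P) (rounds P) (alice_init P) (init_state n x y)"

definition prob_one :: "nat \<Rightarrow> qprotocol \<Rightarrow> (nat \<Rightarrow> bool) \<Rightarrow> (nat \<Rightarrow> bool) \<Rightarrow> real" where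
  "prob_one n P x y =
     (\<Sum>b\<in>{b\<in>Pow {0..<nqubits P}. out_qubit P \<in> b}. (cmod (final_state n P x y b))\<^sup>2)"

text \<open>P computes f on n-bit inputs with error at most 1/3 on every input
  (only bits 0..<n of x and y are inputs).\<close>
definition computes :: "nat \<Rightarrow> ((nat \<Rightarrow> bool) \<Rightarrow> (nat \<Rightarrow> bool) \<Rightarrow> bool) \<Rightarrow> qprotocol \<Rightarrow> bool" where
  "computes n f P \<longleftrightarrow> wf_protocol n P \<and>
     (\<forall>x y. if f x y then prob_one n P x y \<ge> 2/3 else prob_one n P x y \<le> 1/3)"

definition BQC :: "nat \<Rightarrow> ((nat \<Rightarrow> bool) \<Rightarrow> (nat \<Rightarrow> bool) \<Rightarrow> bool) \<Rightarrow> nat" where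
  "BQC n f = (LEAST c. \<exists>P. computes n f P \<and> length (rounds P) = c)"

definition MAJ :: "nat \<Rightarrow> (nat \<Rightarrow> bool) \<Rightarrow> (nat \<Rightarrow> bool) \<Rightarrow> bool" where
  "MAJ n x y \<longleftrightarrow> 2 * card {i. i < n \<and> x i \<and> y i} \<ge> n"

end

theory Submission
  imports Defs "HOL-Real_Asymp.Real_Asymp"
begin

lemma sum_Pow_split:
  assumes "finite M" "A \<subseteq> M"
  shows "(\<Sum>b\<in>Pow M. g b) = (\<Sum>a\<in>Pow A. \<Sum>d\<in>Pow (M - A). g (a \<union> d))"
proof -
  have inj: "inj_on (\<lambda>(a,d). a \<union> d) (Pow A \<times> Pow (M - A))"
  proof (rule inj_onI, clarify)
    fix a d a' d' assume "a \<subseteq> A" "d \<subseteq> M - A" "a' \<subseteq> A" "d' \<subseteq> M - A" "a \<union> d = a' \<union> d'"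
    then show "a = a' \<and> d = d'" by blast
  qed
  have img: "(\<lambda>(a,d). a \<union> d) ` (Pow A \<times> Pow (M - A)) = Pow M"
  proof
    show "(\<lambda>(a,d). a \<union> d) ` (Pow A \<times> Pow (M - A)) \<subseteq> Pow M" using assms by auto
    show "Pow M \<subseteq> (\<lambda>(a,d). a \<union> d) ` (Pow A \<times> Pow (M - A))"
    proof
      fix b assume "b \<in> Pow M"
      then have "b = (\<lambda>(a,d). a \<union> d) (b \<inter> A, b - A)" "(b \<inter> A, b - A) \<in> Pow A \<times> Pow (M - A)" by auto
      then show "b \<in> (\<lambda>(a,d). a \<union> d) ` (Pow A \<times> Pow (M - A))" by blast
    qed
  qed
  have "(\<Sum>a\<in>Pow A. \<Sum>d\<in>Pow (M - A). g (a \<union> d)) = (\<Sum>(a,d)\<in>Pow A \<times> Pow (M - A). g (a \<union> d))"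
    by (rule sum.cartesian_product)
  also have "\<dots> = sum g ((\<lambda>(a,d). a \<union> d) ` (Pow A \<times> Pow (M - A)))"
    using sum.reindex[OF inj, of g] by (simp add: case_prod_unfold)
  also have "\<dots> = sum g (Pow M)" using img by simp
  finally show ?thesis by simp
qed

lemma unitary_norm:
  fixes U :: qop and v :: "nat set \<Rightarrow> complex"
  assumes "unitary_on S U" "finite S"
  shows "(\<Sum>a\<in>Pow S. (cmod (\<Sum>c\<in>Pow S. U a c * v c))\<^sup>2) = (\<Sum>c\<in>Pow S. (cmod (v c))\<^sup>2)"
proof -
  have fin: "finite (Pow S)" using assms by simp
  have "complex_of_real (\<Sum>a\<in>Pow S. (cmod (\<Sum>c\<in>Pow S. U a c * v c))\<^sup>2)
      = (\<Sum>a\<in>Pow S. (\<Sum>c\<in>Pow S. U a c * v c) * cnj (\<Sum>c'\<in>Pow S. U a c' * v c'))"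
    by (simp only: of_real_sum complex_norm_square)
  also have "\<dots> = (\<Sum>a\<in>Pow S. \<Sum>c\<in>Pow S. \<Sum>c'\<in>Pow S. (v c * cnj (v c')) * (U a c * cnj (U a c')))"
    apply (simp add: sum_distrib_left sum_distrib_right mult_ac)
    apply (rule sum.cong, rule refl) apply (subst sum.swap) by simp
  also have "\<dots> = (\<Sum>c\<in>Pow S. \<Sum>c'\<in>Pow S. (v c * cnj (v c')) * (\<Sum>a\<in>Pow S. U a c * cnj (U a c')))"
  proof -
    have "(\<Sum>a\<in>Pow S. \<Sum>c\<in>Pow S. \<Sum>c'\<in>Pow S. (v c * cnj (v c')) * (U a c * cnj (U a c')))
        = (\<Sum>c\<in>Pow S. \<Sum>a\<in>Pow S. \<Sum>c'\<in>Pow S. (v c * cnj (v c')) * (U a c * cnj (U a c')))"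
      by (rule sum.swap)
    also have "\<dots> = (\<Sum>c\<in>Pow S. \<Sum>c'\<in>Pow S. \<Sum>a\<in>Pow S. (v c * cnj (v c')) * (U a c * cnj (U a c')))"
      by (rule sum.cong[OF refl], rule sum.swap)
    finally show ?thesis by (simp add: sum_distrib_left)
  qed
  also have "\<dots> = (\<Sum>c\<in>Pow S. \<Sum>c'\<in>Pow S. (v c * cnj (v c')) * (if c' = c then 1 else 0))"
  proof (intro sum.cong refl)
    fix c c' assume "c \<in> Pow S" "c' \<in> Pow S"
    then have "(\<Sum>a\<in>Pow S. cnj (U a c') * U a c) = (if c' = c then 1 else 0)"
      using assms(1) unfolding unitary_on_def by blast
    then show "v c * cnj (v c') * (\<Sum>a\<in>Pow S. U a c * cnj (U a c')) = v c * cnj (v c') * (if c' = c then 1 else 0)"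
      by (simp add: mult.commute)
  qed
  also have "\<dots> = (\<Sum>c\<in>Pow S. v c * cnj (v c))"
    apply (rule sum.cong[OF refl])
    apply (simp only: mult_zero_right mult_1_right if_distrib[of "\<lambda>z. _ * z"])
    apply (subst sum.delta[OF fin]) by simp
  also have "\<dots> = complex_of_real (\<Sum>c\<in>Pow S. (cmod (v c))\<^sup>2)"
    by (simp only: of_real_sum complex_norm_square)
  finally show ?thesis using of_real_eq_iff by blast
qed

definition nrm :: "nat \<Rightarrow> qstate \<Rightarrow> real" where
  "nrm N \<psi> = (\<Sum>b\<in>Pow {0..<N}. (cmod (\<psi> b))\<^sup>2)"

lemma apply_op_split:
  assumes "a \<subseteq> S" "d \<inter> S = {}"
  shows "apply_op S U \<psi> (a \<union> d) = (\<Sum>c\<in>Pow S. U a c * \<psi> (c \<union> d))"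
proof -
  have "(a \<union> d) \<inter> S = a" "(a \<union> d) - S = d" using assms by auto
  then show ?thesis unfolding apply_op_def by simp
qed

lemma apply_norm:
  assumes "S \<subseteq> {0..<N}" "unitary_on S U"
  shows "nrm N (apply_op S U \<psi>) = nrm N \<psi>"
proof -
  have fS: "finite S" using assms(1) finite_subset by blast
  have "nrm N (apply_op S U \<psi>) = (\<Sum>a\<in>Pow S. \<Sum>d\<in>Pow ({0..<N} - S). (cmod (apply_op S U \<psi> (a \<union> d)))\<^sup>2)"
    unfolding nrm_def by (rule sum_Pow_split[OF _ assms(1)]) simp
  also have "\<dots> = (\<Sum>a\<in>Pow S. \<Sum>d\<in>Pow ({0..<N} - S). (cmod (\<Sum>c\<in>Pow S. U a c * \<psi> (c \<union> d)))\<^sup>2)"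
    by (intro sum.cong refl, subst apply_op_split) auto
  also have "\<dots> = (\<Sum>d\<in>Pow ({0..<N} - S). \<Sum>a\<in>Pow S. (cmod (\<Sum>c\<in>Pow S. U a c * \<psi> (c \<union> d)))\<^sup>2)"
    by (rule sum.swap)
  also have "\<dots> = (\<Sum>d\<in>Pow ({0..<N} - S). \<Sum>c\<in>Pow S. (cmod (\<psi> (c \<union> d)))\<^sup>2)"
    by (intro sum.cong refl unitary_norm[OF assms(2) fS])
  also have "\<dots> = (\<Sum>c\<in>Pow S. \<Sum>d\<in>Pow ({0..<N} - S). (cmod (\<psi> (c \<union> d)))\<^sup>2)"
    by (rule sum.swap)
  also have "\<dots> = nrm N \<psi>"
    unfolding nrm_def by (rule sum_Pow_split[OF _ assms(1), symmetric]) simp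
  finally show ?thesis .
qed

lemma speaker_sub: "A \<subseteq> {0..<N} \<Longrightarrow> speaker_qubits N w A \<subseteq> {0..<N}"
  by auto

lemma next_owner_sub: "A \<subseteq> {0..<N} \<Longrightarrow> q \<in> speaker_qubits N w A \<Longrightarrow> next_owner w q A \<subseteq> {0..<N}"
  by (cases w) auto

lemma exec_norm:
  "valid_rounds N rs A \<Longrightarrow> A \<subseteq> {0..<N} \<Longrightarrow> nrm N (exec_rounds N rs A \<psi>) = nrm N \<psi>"
proof (induction rs arbitrary: A \<psi>)
  case Nil then show ?case by simp
next
  case (Cons r rs)
  obtain w U q where r: "r = (w, U, q)" by (cases r) auto
  from Cons.prems r have v: "q \<in> speaker_qubits N w A" "unitary_on (speaker_qubits N w A) U"
      "valid_rounds N rs (next_owner w q A)" by auto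
  have "nrm N (exec_rounds N (r # rs) A \<psi>) = nrm N (apply_op (speaker_qubits N w A) U \<psi>)"
    using r Cons.IH[OF v(3) next_owner_sub[OF Cons.prems(2) v(1)]] by simp
  also have "\<dots> = nrm N \<psi>" by (rule apply_norm[OF speaker_sub[OF Cons.prems(2)] v(2)])
  finally show ?case .
qed

lemma init_norm:
  assumes "2 * n \<le> N"
  shows "nrm N (init_state n x y) = 1"
proof -
  let ?b0 = "{i. i < n \<and> x i} \<union> {n + i |i. i < n \<and> y i}"
  have "?b0 \<in> Pow {0..<N}" using assms by auto
  then show ?thesis unfolding nrm_def init_state_def
    by (simp add: if_distrib[of "\<lambda>z. (cmod z)\<^sup>2"] cong: if_cong)
qed

lemma prob_one_bounds:
  assumes "wf_protocol n P"
  shows "0 \<le> prob_one n P x y" "prob_one n P x y \<le> 1"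
proof -
  show "0 \<le> prob_one n P x y" unfolding prob_one_def by (rule sum_nonneg) simp
  have "prob_one n P x y \<le> nrm (nqubits P) (final_state n P x y)"
    unfolding prob_one_def nrm_def by (rule sum_mono2) auto
  also have "\<dots> = 1" unfolding final_state_def
    using assms unfolding wf_protocol_def by (simp add: exec_norm init_norm)
  finally show "prob_one n P x y \<le> 1" .
qed

type_synonym amp = "(nat \<Rightarrow> bool) \<Rightarrow> nat \<Rightarrow> nat set \<Rightarrow> complex"

definition dec :: "nat \<Rightarrow> nat set \<Rightarrow> nat \<Rightarrow> ((nat\<Rightarrow>bool) \<Rightarrow> (nat\<Rightarrow>bool) \<Rightarrow> qstate) \<Rightarrow> bool" where
 "dec N A K \<Psi> \<longleftrightarrow> (\<exists>\<alpha> \<beta> :: amp.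
     (\<forall>x y b. b \<subseteq> {0..<N} \<longrightarrow> \<Psi> x y b = (\<Sum>k<K. \<alpha> x k (b \<inter> A) * \<beta> y k (b - A)))
   \<and> (\<forall>x k. k < K \<longrightarrow> (\<Sum>a\<in>Pow A. (cmod (\<alpha> x k a))\<^sup>2) \<le> 1)
   \<and> (\<forall>y k. k < K \<longrightarrow> (\<Sum>d\<in>Pow ({0..<N} - A). (cmod (\<beta> y k d))\<^sup>2) \<le> 1))"

lemma decI:
  assumes "\<And>x y b. b \<subseteq> {0..<N} \<Longrightarrow> \<Psi> x y b = (\<Sum>k<K. \<alpha> x k (b \<inter> A) * \<beta> y k (b - A))"
    "\<And>x k. k < K \<Longrightarrow> (\<Sum>a\<in>Pow A. (cmod (\<alpha> x k a))\<^sup>2) \<le> 1"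
    "\<And>y k. k < K \<Longrightarrow> (\<Sum>d\<in>Pow ({0..<N} - A). (cmod (\<beta> y k d))\<^sup>2) \<le> 1"
  shows "dec N A K \<Psi>"
  unfolding dec_def using assms by blast

lemma sum_inj_le:
  fixes g :: "'b \<Rightarrow> real"
  assumes "finite T" "inj_on h S" "h ` S \<subseteq> T" "\<And>t. 0 \<le> g t"
  shows "(\<Sum>s\<in>S. g (h s)) \<le> (\<Sum>t\<in>T. g t)"
proof -
  have "(\<Sum>s\<in>S. g (h s)) = (\<Sum>t\<in>h ` S. g t)" by (simp add: sum.reindex[OF assms(2)])
  also have "\<dots> \<le> (\<Sum>t\<in>T. g t)" by (rule sum_mono2[OF assms(1) assms(3)]) (use assms(4) in auto)
  finally show ?thesis .
qed

lemma sum_double: "(\<Sum>j<2*K. f j) = (\<Sum>k<K. f (2*k) + f (2*k+1))" for K :: nat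
  by (induction K) (simp_all add: add_ac)

lemma dec_alice_unitary:
  assumes "A \<subseteq> {0..<N}" "unitary_on A U" "dec N A K \<Psi>"
  shows "dec N A K (\<lambda>x y. apply_op A U (\<Psi> x y))"
proof -
  obtain \<alpha> \<beta> :: amp where rep: "\<And>x y b. b \<subseteq> {0..<N} \<Longrightarrow> \<Psi> x y b = (\<Sum>k<K. \<alpha> x k (b \<inter> A) * \<beta> y k (b - A))"
    and na: "\<And>x k. k < K \<Longrightarrow> (\<Sum>a\<in>Pow A. (cmod (\<alpha> x k a))\<^sup>2) \<le> 1"
    and nb: "\<And>y k. k < K \<Longrightarrow> (\<Sum>d\<in>Pow ({0..<N} - A). (cmod (\<beta> y k d))\<^sup>2) \<le> 1"
    using assms(3) unfolding dec_def by blast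
  have fA: "finite A" using assms(1) finite_subset by blast
  define \<alpha>' :: amp where "\<alpha>' x k a = (\<Sum>c\<in>Pow A. U a c * \<alpha> x k c)" for x k a
  show ?thesis
  proof (rule decI[where \<alpha> = \<alpha>' and \<beta> = \<beta>])
    fix x y b assume b: "b \<subseteq> {0..<N}"
    have "apply_op A U (\<Psi> x y) b = (\<Sum>c\<in>Pow A. U (b \<inter> A) c * (\<Sum>k<K. \<alpha> x k c * \<beta> y k (b - A)))"
      unfolding apply_op_def
    proof (intro sum.cong refl)
      fix c assume c: "c \<in> Pow A"
      have "c \<union> (b - A) \<subseteq> {0..<N}" using c b assms(1) by auto
      moreover have "(c \<union> (b - A)) \<inter> A = c" "(c \<union> (b - A)) - A = b - A" using c by auto
      ultimately show "U (b \<inter> A) c * \<Psi> x y (c \<union> (b - A)) = U (b \<inter> A) c * (\<Sum>k<K. \<alpha> x k c * \<beta> y k (b - A))"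
        using rep by simp
    qed
    also have "\<dots> = (\<Sum>k<K. \<alpha>' x k (b \<inter> A) * \<beta> y k (b - A))"
      unfolding \<alpha>'_def by (simp add: sum_distrib_left sum_distrib_right mult_ac) (rule sum.swap)
    finally show "apply_op A U (\<Psi> x y) b = (\<Sum>k<K. \<alpha>' x k (b \<inter> A) * \<beta> y k (b - A))" .
  next
    fix x k assume "k < K"
    then show "(\<Sum>a\<in>Pow A. (cmod (\<alpha>' x k a))\<^sup>2) \<le> 1"
      unfolding \<alpha>'_def using unitary_norm[OF assms(2) fA] na by simp
  next
    fix y k assume "k < K" then show "(\<Sum>d\<in>Pow ({0..<N} - A). (cmod (\<beta> y k d))\<^sup>2) \<le> 1" by (rule nb)
  qed
qed

lemma dec_bob_unitary:
  assumes "A \<subseteq> {0..<N}" "unitary_on ({0..<N} - A) U" "dec N A K \<Psi>"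
  shows "dec N A K (\<lambda>x y. apply_op ({0..<N} - A) U (\<Psi> x y))"
proof -
  obtain \<alpha> \<beta> :: amp where rep: "\<And>x y b. b \<subseteq> {0..<N} \<Longrightarrow> \<Psi> x y b = (\<Sum>k<K. \<alpha> x k (b \<inter> A) * \<beta> y k (b - A))"
    and na: "\<And>x k. k < K \<Longrightarrow> (\<Sum>a\<in>Pow A. (cmod (\<alpha> x k a))\<^sup>2) \<le> 1"
    and nb: "\<And>y k. k < K \<Longrightarrow> (\<Sum>d\<in>Pow ({0..<N} - A). (cmod (\<beta> y k d))\<^sup>2) \<le> 1"
    using assms(3) unfolding dec_def by blast
  let ?S = "{0..<N} - A"
  have fS: "finite ?S" by simp
  define \<beta>' :: amp where "\<beta>' y k d = (\<Sum>c\<in>Pow ?S. U d c * \<beta> y k c)" for y k d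
  show ?thesis
  proof (rule decI[where \<alpha> = \<alpha> and \<beta> = \<beta>'])
    fix x y b assume b: "b \<subseteq> {0..<N}"
    have e: "b \<inter> ?S = b - A" "b - ?S = b \<inter> A" using b by auto
    have "apply_op ?S U (\<Psi> x y) b = (\<Sum>c\<in>Pow ?S. U (b - A) c * (\<Sum>k<K. \<alpha> x k (b \<inter> A) * \<beta> y k c))"
      unfolding apply_op_def e
    proof (intro sum.cong refl)
      fix c assume c: "c \<in> Pow ?S"
      have "c \<union> (b \<inter> A) \<subseteq> {0..<N}" using c b assms(1) by auto
      moreover have "(c \<union> (b \<inter> A)) \<inter> A = b \<inter> A" "(c \<union> (b \<inter> A)) - A = c" using c by auto
      ultimately show "U (b - A) c * \<Psi> x y (c \<union> (b \<inter> A)) = U (b - A) c * (\<Sum>k<K. \<alpha> x k (b \<inter> A) * \<beta> y k c)"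
        using rep by simp
    qed
    also have "\<dots> = (\<Sum>k<K. \<alpha> x k (b \<inter> A) * \<beta>' y k (b - A))"
      unfolding \<beta>'_def by (simp add: sum_distrib_left sum_distrib_right mult_ac) (rule sum.swap)
    finally show "apply_op ?S U (\<Psi> x y) b = (\<Sum>k<K. \<alpha> x k (b \<inter> A) * \<beta>' y k (b - A))" .
  next
    fix x k assume "k < K" then show "(\<Sum>a\<in>Pow A. (cmod (\<alpha> x k a))\<^sup>2) \<le> 1" by (rule na)
  next
    fix y k assume "k < K"
    then show "(\<Sum>d\<in>Pow ?S. (cmod (\<beta>' y k d))\<^sup>2) \<le> 1"
      unfolding \<beta>'_def using unitary_norm[OF assms(2) fS] nb by simp
  qed
qed

lemma sum_if_filter_le:
  fixes G :: "nat set \<Rightarrow> real"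
  assumes "finite D" "finite T" "inj_on h {d\<in>D. P d}" "h ` {d\<in>D. P d} \<subseteq> T" "\<And>t. 0 \<le> G t"
  shows "(\<Sum>d\<in>D. if P d then G (h d) else 0) \<le> (\<Sum>t\<in>T. G t)"
proof -
  have "(\<Sum>d\<in>D. if P d then G (h d) else 0) = (\<Sum>d\<in>{d\<in>D. P d}. G (h d))"
    by (simp add: sum.inter_filter[OF assms(1)])
  also have "\<dots> \<le> (\<Sum>t\<in>T. G t)" by (rule sum_inj_le[OF assms(2-5)])
  finally show ?thesis .
qed

lemma diff_inj: "(q \<in> x) = (q \<in> y) \<Longrightarrow> x - {q} = y - {q} \<Longrightarrow> x = y" by blast

lemma lessThan_one: "{..<1::nat} = {0}" by auto

lemma dec_alice_send:
  assumes "A \<subseteq> {0..<N}" "q \<in> A" "dec N A K \<Psi>"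
  shows "dec N (A - {q}) (2*K) \<Psi>"
proof -
  obtain \<alpha> \<beta> :: amp where rep: "\<And>x y b. b \<subseteq> {0..<N} \<Longrightarrow> \<Psi> x y b = (\<Sum>k<K. \<alpha> x k (b \<inter> A) * \<beta> y k (b - A))"
    and na: "\<And>x k. k < K \<Longrightarrow> (\<Sum>a\<in>Pow A. (cmod (\<alpha> x k a))\<^sup>2) \<le> 1"
    and nb: "\<And>y k. k < K \<Longrightarrow> (\<Sum>d\<in>Pow ({0..<N} - A). (cmod (\<beta> y k d))\<^sup>2) \<le> 1"
    using assms(3) unfolding dec_def by blast
  let ?A' = "A - {q}"
  define ext :: "nat \<Rightarrow> nat set \<Rightarrow> nat set" where "ext j a = (if j mod 2 = 1 then insert q a else a)" for j a
  define \<alpha>' :: amp where "\<alpha>' x j a = \<alpha> x (j div 2) (ext j a)" for x j a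
  define \<beta>' :: amp where "\<beta>' y j d = (if (q \<in> d) = (j mod 2 = 1) then \<beta> y (j div 2) (d - {q}) else 0)" for y j d
  show ?thesis
  proof (rule decI[where \<alpha> = \<alpha>' and \<beta> = \<beta>'])
    fix x y b assume b: "b \<subseteq> {0..<N}"
    have "(\<Sum>j<2*K. \<alpha>' x j (b \<inter> ?A') * \<beta>' y j (b - ?A'))
       = (\<Sum>k<K. \<alpha>' x (2*k) (b \<inter> ?A') * \<beta>' y (2*k) (b - ?A') + \<alpha>' x (2*k+1) (b \<inter> ?A') * \<beta>' y (2*k+1) (b - ?A'))"
      by (rule sum_double)
    also have "\<dots> = (\<Sum>k<K. \<alpha> x k (b \<inter> A) * \<beta> y k (b - A))"
    proof (intro sum.cong refl)
      fix k
      show "\<alpha>' x (2*k) (b \<inter> ?A') * \<beta>' y (2*k) (b - ?A') + \<alpha>' x (2*k+1) (b \<inter> ?A') * \<beta>' y (2*k+1) (b - ?A')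
          = \<alpha> x k (b \<inter> A) * \<beta> y k (b - A)"
      proof (cases "q \<in> b")
        case True
        have "insert q (b \<inter> ?A') = b \<inter> A" "(b - ?A') - {q} = b - A" using True assms(2) by auto
        then show ?thesis using True unfolding \<alpha>'_def \<beta>'_def ext_def by simp
      next
        case False
        have "b \<inter> ?A' = b \<inter> A" "(b - ?A') - {q} = b - A" using False by auto
        then show ?thesis using False unfolding \<alpha>'_def \<beta>'_def ext_def by simp
      qed
    qed
    also have "\<dots> = \<Psi> x y b" using rep[OF b] by simp
    finally show "\<Psi> x y b = (\<Sum>j<2*K. \<alpha>' x j (b \<inter> ?A') * \<beta>' y j (b - ?A'))" by simp
  next
    fix x j assume j: "j < 2*K"
    have fA: "finite A" using assms(1) finite_subset by blast
    have "(\<Sum>a\<in>Pow ?A'. (cmod (\<alpha>' x j a))\<^sup>2) = (\<Sum>a\<in>Pow ?A'. (\<lambda>t. (cmod (\<alpha> x (j div 2) t))\<^sup>2) (ext j a))"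
      unfolding \<alpha>'_def by simp
    also have "\<dots> \<le> (\<Sum>t\<in>Pow A. (cmod (\<alpha> x (j div 2) t))\<^sup>2)"
    proof (rule sum_inj_le)
      show "finite (Pow A)" using fA by simp
      show "inj_on (ext j) (Pow ?A')" unfolding ext_def by (rule inj_onI) (auto split: if_splits)
      show "ext j ` Pow ?A' \<subseteq> Pow A" unfolding ext_def using assms(2) by auto
    qed simp
    also have "\<dots> \<le> 1" using na j by simp
    finally show "(\<Sum>a\<in>Pow ?A'. (cmod (\<alpha>' x j a))\<^sup>2) \<le> 1" .
  next
    fix y j assume j: "j < 2*K"
    have "(\<Sum>d\<in>Pow ({0..<N} - ?A'). (cmod (\<beta>' y j d))\<^sup>2)
        = (\<Sum>d\<in>Pow ({0..<N} - ?A'). if (q \<in> d) = (j mod 2 = 1) then (\<lambda>t. (cmod (\<beta> y (j div 2) t))\<^sup>2) (d - {q}) else 0)"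
      unfolding \<beta>'_def by (simp only: if_distrib[of "\<lambda>z. (cmod z)\<^sup>2"] norm_zero zero_power2)
    also have "\<dots> \<le> (\<Sum>t\<in>Pow ({0..<N} - A). (cmod (\<beta> y (j div 2) t))\<^sup>2)"
    proof (rule sum_if_filter_le)
      show "inj_on (\<lambda>d. d - {q}) {d \<in> Pow ({0..<N} - ?A'). (q \<in> d) = (j mod 2 = 1)}"
        by (rule inj_onI, rule diff_inj, auto)
      show "(\<lambda>d. d - {q}) ` {d \<in> Pow ({0..<N} - ?A'). (q \<in> d) = (j mod 2 = 1)} \<subseteq> Pow ({0..<N} - A)"
        by auto
    qed simp_all
    also have "\<dots> \<le> 1" using nb j by simp
    finally show "(\<Sum>d\<in>Pow ({0..<N} - ?A'). (cmod (\<beta>' y j d))\<^sup>2) \<le> 1" .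
  qed
qed

lemma dec_bob_send:
  assumes "A \<subseteq> {0..<N}" "q \<in> {0..<N} - A" "dec N A K \<Psi>"
  shows "dec N (insert q A) (2*K) \<Psi>"
proof -
  obtain \<alpha> \<beta> :: amp where rep: "\<And>x y b. b \<subseteq> {0..<N} \<Longrightarrow> \<Psi> x y b = (\<Sum>k<K. \<alpha> x k (b \<inter> A) * \<beta> y k (b - A))"
    and na: "\<And>x k. k < K \<Longrightarrow> (\<Sum>a\<in>Pow A. (cmod (\<alpha> x k a))\<^sup>2) \<le> 1"
    and nb: "\<And>y k. k < K \<Longrightarrow> (\<Sum>d\<in>Pow ({0..<N} - A). (cmod (\<beta> y k d))\<^sup>2) \<le> 1"
    using assms(3) unfolding dec_def by blast
  let ?A' = "insert q A"
  define ext :: "nat \<Rightarrow> nat set \<Rightarrow> nat set" where "ext j a = (if j mod 2 = 1 then insert q a else a)" for j a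
  define \<beta>' :: amp where "\<beta>' y j d = \<beta> y (j div 2) (ext j d)" for y j d
  define \<alpha>' :: amp where "\<alpha>' x j a = (if (q \<in> a) = (j mod 2 = 1) then \<alpha> x (j div 2) (a - {q}) else 0)" for x j a
  show ?thesis
  proof (rule decI[where \<alpha> = \<alpha>' and \<beta> = \<beta>'])
    fix x y b assume b: "b \<subseteq> {0..<N}"
    have "(\<Sum>j<2*K. \<alpha>' x j (b \<inter> ?A') * \<beta>' y j (b - ?A'))
       = (\<Sum>k<K. \<alpha>' x (2*k) (b \<inter> ?A') * \<beta>' y (2*k) (b - ?A') + \<alpha>' x (2*k+1) (b \<inter> ?A') * \<beta>' y (2*k+1) (b - ?A'))"
      by (rule sum_double)
    also have "\<dots> = (\<Sum>k<K. \<alpha> x k (b \<inter> A) * \<beta> y k (b - A))"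
    proof (intro sum.cong refl)
      fix k
      show "\<alpha>' x (2*k) (b \<inter> ?A') * \<beta>' y (2*k) (b - ?A') + \<alpha>' x (2*k+1) (b \<inter> ?A') * \<beta>' y (2*k+1) (b - ?A')
          = \<alpha> x k (b \<inter> A) * \<beta> y k (b - A)"
      proof (cases "q \<in> b")
        case True
        have "(b \<inter> ?A') - {q} = b \<inter> A" "insert q (b - ?A') = b - A" using True assms(2) by auto
        then show ?thesis using True unfolding \<alpha>'_def \<beta>'_def ext_def by simp
      next
        case False
        have "(b \<inter> ?A') - {q} = b \<inter> A" "b - ?A' = b - A" using False by auto
        then show ?thesis using False unfolding \<alpha>'_def \<beta>'_def ext_def by simp
      qed
    qed
    also have "\<dots> = \<Psi> x y b" using rep[OF b] by simp
    finally show "\<Psi> x y b = (\<Sum>j<2*K. \<alpha>' x j (b \<inter> ?A') * \<beta>' y j (b - ?A'))" by simp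
  next
    fix y j assume j: "j < 2*K"
    have "(\<Sum>a\<in>Pow ({0..<N} - ?A'). (cmod (\<beta>' y j a))\<^sup>2) = (\<Sum>a\<in>Pow ({0..<N} - ?A'). (\<lambda>t. (cmod (\<beta> y (j div 2) t))\<^sup>2) (ext j a))"
      unfolding \<beta>'_def by simp
    also have "\<dots> \<le> (\<Sum>t\<in>Pow ({0..<N} - A). (cmod (\<beta> y (j div 2) t))\<^sup>2)"
    proof (rule sum_inj_le)
      show "inj_on (ext j) (Pow ({0..<N} - ?A'))" unfolding ext_def by (rule inj_onI) (auto split: if_splits)
      show "ext j ` Pow ({0..<N} - ?A') \<subseteq> Pow ({0..<N} - A)" unfolding ext_def using assms(2) by auto
    qed simp_all
    also have "\<dots> \<le> 1" using nb j by simp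
    finally show "(\<Sum>a\<in>Pow ({0..<N} - ?A'). (cmod (\<beta>' y j a))\<^sup>2) \<le> 1" .
  next
    fix x j assume j: "j < 2*K"
    have fA: "finite ?A'" using assms(1,2) finite_subset by auto
    have "(\<Sum>d\<in>Pow ?A'. (cmod (\<alpha>' x j d))\<^sup>2)
        = (\<Sum>d\<in>Pow ?A'. if (q \<in> d) = (j mod 2 = 1) then (\<lambda>t. (cmod (\<alpha> x (j div 2) t))\<^sup>2) (d - {q}) else 0)"
      unfolding \<alpha>'_def by (simp only: if_distrib[of "\<lambda>z. (cmod z)\<^sup>2"] norm_zero zero_power2)
    also have "\<dots> \<le> (\<Sum>t\<in>Pow A. (cmod (\<alpha> x (j div 2) t))\<^sup>2)"
    proof (rule sum_if_filter_le)
      show "finite (Pow A)" using assms(1) finite_subset by (simp add: finite_subset)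
      show "inj_on (\<lambda>d. d - {q}) {d \<in> Pow ?A'. (q \<in> d) = (j mod 2 = 1)}"
        by (rule inj_onI, rule diff_inj, auto)
      show "(\<lambda>d. d - {q}) ` {d \<in> Pow ?A'. (q \<in> d) = (j mod 2 = 1)} \<subseteq> Pow A"
        by auto
    qed (use fA in simp_all)
    also have "\<dots> \<le> 1" using na j by simp
    finally show "(\<Sum>d\<in>Pow ?A'. (cmod (\<alpha>' x j d))\<^sup>2) \<le> 1" .
  qed
qed

lemma dec_exec:
  "valid_rounds N rs A \<Longrightarrow> A \<subseteq> {0..<N} \<Longrightarrow> dec N A K \<Psi> \<Longrightarrow>
   \<exists>A'. A' \<subseteq> {0..<N} \<and> dec N A' (K * 2 ^ length rs) (\<lambda>x y. exec_rounds N rs A (\<Psi> x y))"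
proof (induction rs arbitrary: A K \<Psi>)
  case Nil then show ?case by auto
next
  case (Cons r rs)
  obtain w U q where r: "r = (w, U, q)" by (cases r) auto
  from Cons.prems r have v: "q \<in> speaker_qubits N w A" "unitary_on (speaker_qubits N w A) U"
      "valid_rounds N rs (next_owner w q A)" by auto
  have sub: "next_owner w q A \<subseteq> {0..<N}" using v(1) Cons.prems(2) by (cases w) auto
  have d: "dec N (next_owner w q A) (2*K) (\<lambda>x y. apply_op (speaker_qubits N w A) U (\<Psi> x y))"
  proof (cases w)
    case True
    then show ?thesis using v dec_alice_send[OF Cons.prems(2) _ dec_alice_unitary[OF Cons.prems(2) _ Cons.prems(3)]]
      by simp
  next
    case False
    then show ?thesis using v dec_bob_send[OF Cons.prems(2) _ dec_bob_unitary[OF Cons.prems(2) _ Cons.prems(3)]]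
      by simp
  qed
  obtain A' where "A' \<subseteq> {0..<N} \<and> dec N A' (2 * K * 2 ^ length rs)
      (\<lambda>x y. exec_rounds N rs (next_owner w q A) (apply_op (speaker_qubits N w A) U (\<Psi> x y)))"
    using Cons.IH[OF v(3) sub d] by blast
  then show ?case using r by (auto simp: mult_ac)
qed

lemma dec_init:
  assumes "wf_protocol n P"
  shows "dec (nqubits P) (alice_init P) 1 (\<lambda>x y. init_state n x y)"
proof -
  let ?A = "alice_init P" and ?N = "nqubits P"
  define X where "X x = {i. i < n \<and> x i}" for x :: "nat \<Rightarrow> bool"
  define Y where "Y y = {n + i |i. i < n \<and> y i}" for y :: "nat \<Rightarrow> bool"
  have XA: "X x \<subseteq> ?A" for x using assms unfolding wf_protocol_def X_def by auto
  have YA: "Y y \<inter> ?A = {}" for y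
  proof -
    have "Y y \<subseteq> {n..<2*n}" unfolding Y_def by auto
    then show ?thesis using assms unfolding wf_protocol_def by blast
  qed
  show ?thesis
  proof (rule decI[where \<alpha> = "\<lambda>x k a. if a = X x then 1 else 0" and \<beta> = "\<lambda>y k d. if d = Y y then 1 else 0"])
    fix x y b
    have "(b = X x \<union> Y y) = (b \<inter> ?A = X x \<and> b - ?A = Y y)"
      using XA[of x] YA[of y] by blast
    then show "init_state n x y b = (\<Sum>k<(1::nat). (if b \<inter> ?A = X x then 1 else 0) * (if b - ?A = Y y then 1 else 0))"
      unfolding init_state_def X_def Y_def lessThan_one by simp
  next
    fix x k
    have fA: "finite (Pow ?A)" using assms unfolding wf_protocol_def by (meson finite_Pow_iff finite_atLeastLessThan finite_subset)
    show "(\<Sum>a\<in>Pow ?A. (cmod (if a = X x then 1 else 0))\<^sup>2) \<le> 1"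
      using fA by (simp add: if_distrib[of "\<lambda>z. (cmod z)\<^sup>2"] sum.delta cong: if_cong)
  next
    fix y k
    show "(\<Sum>d\<in>Pow ({0..<?N} - ?A). (cmod (if d = Y y then 1 else 0))\<^sup>2) \<le> 1"
      by (simp add: if_distrib[of "\<lambda>z. (cmod z)\<^sup>2"] sum.delta cong: if_cong)
  qed
qed

inductive nuB :: "real \<Rightarrow> ('x \<Rightarrow> 'y \<Rightarrow> real) \<Rightarrow> bool" where
  r1: "(\<And>x. \<bar>f x\<bar> \<le> 1) \<Longrightarrow> (\<And>y. \<bar>g y\<bar> \<le> 1) \<Longrightarrow> nuB 1 (\<lambda>x y. f x * g y)"
| add: "nuB a M \<Longrightarrow> nuB b N \<Longrightarrow> nuB (a + b) (\<lambda>x y. M x y + N x y)"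
| scale: "nuB a M \<Longrightarrow> nuB (\<bar>c\<bar> * a) (\<lambda>x y. c * M x y)"
| mono: "nuB a M \<Longrightarrow> a \<le> b \<Longrightarrow> nuB b M"

lemma nuB_cong: "nuB a M \<Longrightarrow> (\<And>x y. M x y = M' x y) \<Longrightarrow> nuB a M'"
proof -
  assume "nuB a M" "\<And>x y. M x y = M' x y"
  then have "M = M'" by (intro ext)
  with \<open>nuB a M\<close> show ?thesis by simp
qed

lemma nuB_one: "nuB 1 (\<lambda>x y. 1)"
  using nuB.r1[of "\<lambda>x. 1" "\<lambda>y. 1"] by simp

lemma nuB_zero: "nuB 0 (\<lambda>x y. 0)"
  using nuB.scale[OF nuB_one, of 0] by simp

lemma nuB_sum: "finite I \<Longrightarrow> (\<And>i. i \<in> I \<Longrightarrow> nuB (a i) (M i)) \<Longrightarrow> nuB (\<Sum>i\<in>I. a i) (\<lambda>x y. \<Sum>i\<in>I. M i x y)"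
proof (induction I rule: finite_induct)
  case empty then show ?case using nuB_zero by simp
next
  case (insert i I)
  then show ?case using nuB.add[of "a i" "M i" "sum a I" "\<lambda>x y. \<Sum>i\<in>I. M i x y"] by simp
qed

lemma cmod_prod_le: "cmod (u * cnj v) \<le> ((cmod u)\<^sup>2 + (cmod v)\<^sup>2) / 2"
proof -
  have "cmod (u * cnj v) = cmod u * cmod v" by (simp add: norm_mult)
  also have "\<dots> \<le> ((cmod u)\<^sup>2 + (cmod v)\<^sup>2) / 2"
    using sum_squares_bound[of "cmod u" "cmod v"] by (simp add: power2_eq_square field_simps)
  finally show ?thesis .
qed

lemma inner_le1:
  fixes u v :: "nat set \<Rightarrow> complex" and ind :: "nat set \<Rightarrow> bool"
  assumes "finite T" "(\<Sum>a\<in>T. (cmod (u a))\<^sup>2) \<le> 1" "(\<Sum>a\<in>T. (cmod (v a))\<^sup>2) \<le> 1"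
  shows "cmod (\<Sum>a\<in>T. if ind a then u a * cnj (v a) else 0) \<le> 1"
proof -
  have "cmod (\<Sum>a\<in>T. if ind a then u a * cnj (v a) else 0) \<le> (\<Sum>a\<in>T. cmod (if ind a then u a * cnj (v a) else 0))"
    by (rule norm_sum)
  also have "\<dots> \<le> (\<Sum>a\<in>T. ((cmod (u a))\<^sup>2 + (cmod (v a))\<^sup>2) / 2)"
    by (rule sum_mono) (use cmod_prod_le in auto)
  also have "\<dots> = ((\<Sum>a\<in>T. (cmod (u a))\<^sup>2) + (\<Sum>a\<in>T. (cmod (v a))\<^sup>2)) / 2"
    by (simp only: sum_divide_distrib[symmetric] sum.distrib)
  also have "\<dots> \<le> 1" using assms by simp
  finally show ?thesis .
qed

lemma prob_formula:
  fixes \<alpha> \<beta> :: "nat \<Rightarrow> nat set \<Rightarrow> complex" and \<psi> :: qstate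
  assumes A: "A \<subseteq> {0..<N}"
    and rep: "\<And>b. b \<subseteq> {0..<N} \<Longrightarrow> \<psi> b = (\<Sum>k<K. \<alpha> k (b \<inter> A) * \<beta> k (b - A))"
  shows "complex_of_real (\<Sum>b\<in>{b\<in>Pow {0..<N}. ou \<in> b}. (cmod (\<psi> b))\<^sup>2)
    = (\<Sum>k<K. \<Sum>k'<K. (\<Sum>a\<in>Pow A. if (ou \<in> A \<longrightarrow> ou \<in> a) then \<alpha> k a * cnj (\<alpha> k' a) else 0)
                    * (\<Sum>d\<in>Pow ({0..<N} - A). if (ou \<notin> A \<longrightarrow> ou \<in> d) then \<beta> k d * cnj (\<beta> k' d) else 0))"
proof -
  let ?B = "{0..<N} - A"
  let ?ia = "\<lambda>a. ou \<in> A \<longrightarrow> ou \<in> a" and ?id = "\<lambda>d. ou \<notin> A \<longrightarrow> ou \<in> d"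
  have fA: "finite (Pow A)" using A by (meson finite_Pow_iff finite_atLeastLessThan finite_subset)
  have fB: "finite (Pow ?B)" by simp
  have "complex_of_real (\<Sum>b\<in>{b\<in>Pow {0..<N}. ou \<in> b}. (cmod (\<psi> b))\<^sup>2)
      = (\<Sum>b\<in>{b\<in>Pow {0..<N}. ou \<in> b}. \<psi> b * cnj (\<psi> b))"
    by (simp only: of_real_sum complex_norm_square)
  also have "\<dots> = (\<Sum>b\<in>Pow {0..<N}. if ou \<in> b then \<psi> b * cnj (\<psi> b) else 0)"
    by (rule sum.inter_filter) simp
  also have "\<dots> = (\<Sum>a\<in>Pow A. \<Sum>d\<in>Pow ?B. if ou \<in> a \<union> d then \<psi> (a \<union> d) * cnj (\<psi> (a \<union> d)) else 0)"
    by (rule sum_Pow_split[OF _ A]) simp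
  also have "\<dots> = (\<Sum>a\<in>Pow A. \<Sum>d\<in>Pow ?B. \<Sum>k<K. \<Sum>k'<K.
        (if ?ia a then \<alpha> k a * cnj (\<alpha> k' a) else 0) * (if ?id d then \<beta> k d * cnj (\<beta> k' d) else 0))"
  proof (intro sum.cong refl)
    fix a d assume a: "a \<in> Pow A" and d: "d \<in> Pow ?B"
    have ad: "a \<union> d \<subseteq> {0..<N}" "(a \<union> d) \<inter> A = a" "(a \<union> d) - A = d" using a d A by auto
    have io: "(ou \<in> a \<union> d) = (?ia a \<and> ?id d)" using a d by auto
    have psi: "\<psi> (a \<union> d) = (\<Sum>k<K. \<alpha> k a * \<beta> k d)" using rep[OF ad(1)] ad(2,3) by simp
    show "(if ou \<in> a \<union> d then \<psi> (a \<union> d) * cnj (\<psi> (a \<union> d)) else 0) = (\<Sum>k<K. \<Sum>k'<K.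
        (if ?ia a then \<alpha> k a * cnj (\<alpha> k' a) else 0) * (if ?id d then \<beta> k d * cnj (\<beta> k' d) else 0))"
    proof (cases "?ia a \<and> ?id d")
      case True
      then show ?thesis unfolding io psi
        by (simp add: sum_product mult_ac)
    next
      case False
      then show ?thesis unfolding io by auto
    qed
  qed
  also have "\<dots> = (\<Sum>k<K. \<Sum>k'<K. \<Sum>a\<in>Pow A. \<Sum>d\<in>Pow ?B.
        (if ?ia a then \<alpha> k a * cnj (\<alpha> k' a) else 0) * (if ?id d then \<beta> k d * cnj (\<beta> k' d) else 0))"
  proof -
    have s1: "(\<Sum>d\<in>Pow ?B. \<Sum>k<K. \<Sum>k'<K. f d k k') = (\<Sum>k<K. \<Sum>k'<K. \<Sum>d\<in>Pow ?B. f d k k')" for f :: "_ \<Rightarrow> _ \<Rightarrow> _ \<Rightarrow> complex"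
      by (subst sum.swap) (rule sum.cong[OF refl], rule sum.swap)
    have s2: "(\<Sum>a\<in>Pow A. \<Sum>k<K. \<Sum>k'<K. f a k k') = (\<Sum>k<K. \<Sum>k'<K. \<Sum>a\<in>Pow A. f a k k')" for f :: "_ \<Rightarrow> _ \<Rightarrow> _ \<Rightarrow> complex"
      by (subst sum.swap) (rule sum.cong[OF refl], rule sum.swap)
    show ?thesis by (simp only: s1 s2)
  qed
  also have "\<dots> = (\<Sum>k<K. \<Sum>k'<K. (\<Sum>a\<in>Pow A. if ?ia a then \<alpha> k a * cnj (\<alpha> k' a) else 0)
                    * (\<Sum>d\<in>Pow ?B. if ?id d then \<beta> k d * cnj (\<beta> k' d) else 0))"
    by (simp only: sum_product)
  finally show ?thesis .
qed

lemma Re_mult_split: "Re (u * v) = Re u * Re v + (- Im u) * Im v" by simp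

lemma prob_nuB:
  fixes px :: "'x \<Rightarrow> nat \<Rightarrow> bool" and py :: "'y \<Rightarrow> nat \<Rightarrow> bool"
  assumes wf: "wf_protocol n P"
  shows "nuB (2 * 4 ^ length (rounds P)) (\<lambda>x y. prob_one n P (px x) (py y))"
proof -
  let ?N = "nqubits P" and ?c = "length (rounds P)" and ?ou = "out_qubit P"
  define K where "K = (2::nat) ^ ?c"
  have A0: "alice_init P \<subseteq> {0..<?N}" "valid_rounds ?N (rounds P) (alice_init P)"
    using wf unfolding wf_protocol_def by auto
  obtain A where A: "A \<subseteq> {0..<?N}" and d: "dec ?N A K (\<lambda>x y. final_state n P x y)"
    using dec_exec[OF A0(2) A0(1) dec_init[OF wf]] unfolding final_state_def K_def by auto
  obtain \<alpha> \<beta> :: amp where rep: "\<And>x y b. b \<subseteq> {0..<?N} \<Longrightarrow> final_state n P x y b = (\<Sum>k<K. \<alpha> x k (b \<inter> A) * \<beta> y k (b - A))"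
    and na: "\<And>x k. k < K \<Longrightarrow> (\<Sum>a\<in>Pow A. (cmod (\<alpha> x k a))\<^sup>2) \<le> 1"
    and nb: "\<And>y k. k < K \<Longrightarrow> (\<Sum>d\<in>Pow ({0..<?N} - A). (cmod (\<beta> y k d))\<^sup>2) \<le> 1"
    using d unfolding dec_def by blast
  define F where "F k k' x = (\<Sum>a\<in>Pow A. if (?ou \<in> A \<longrightarrow> ?ou \<in> a) then \<alpha> x k a * cnj (\<alpha> x k' a) else 0)" for k k' x
  define G where "G k k' y = (\<Sum>d\<in>Pow ({0..<?N} - A). if (?ou \<notin> A \<longrightarrow> ?ou \<in> d) then \<beta> y k d * cnj (\<beta> y k' d) else 0)" for k k' y
  have fA: "finite (Pow A)" using A by (meson finite_Pow_iff finite_atLeastLessThan finite_subset)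
  have Fb: "cmod (F k k' x) \<le> 1" if "k < K" "k' < K" for k k' x
    unfolding F_def by (rule inner_le1[OF fA na na]) (use that in auto)
  have Gb: "cmod (G k k' y) \<le> 1" if "k < K" "k' < K" for k k' y
    unfolding G_def by (rule inner_le1[OF _ nb nb]) (use that in auto)
  have pf: "prob_one n P x y = (\<Sum>k<K. \<Sum>k'<K. Re (F k k' x) * Re (G k k' y) + (- Im (F k k' x)) * Im (G k k' y))" for x y
  proof -
    have "complex_of_real (prob_one n P x y) = (\<Sum>k<K. \<Sum>k'<K. F k k' x * G k k' y)"
      unfolding prob_one_def F_def G_def by (rule prob_formula[where \<psi> = "final_state n P x y" and \<alpha> = "\<alpha> x" and \<beta> = "\<beta> y", OF A rep])
    then have "prob_one n P x y = Re (\<Sum>k<K. \<Sum>k'<K. F k k' x * G k k' y)"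
      by (metis Re_complex_of_real)
    then show ?thesis by (simp only: Re_sum Re_mult_split)
  qed
  have nb1: "nuB (\<Sum>k<K. \<Sum>k'<K. 1 + 1) (\<lambda>x y. \<Sum>k<K. \<Sum>k'<K. Re (F k k' (px x)) * Re (G k k' (py y)) + (- Im (F k k' (px x))) * Im (G k k' (py y)))"
  proof (intro nuB_sum finite_lessThan nuB.add nuB.r1)
    fix k k' x y assume "k \<in> {..<K}" "k' \<in> {..<K}"
    then have kk: "k < K" "k' < K" by auto
    show "\<bar>Re (F k k' (px x))\<bar> \<le> 1" using abs_Re_le_cmod Fb[OF kk] order_trans by blast
    show "\<bar>Re (G k k' (py y))\<bar> \<le> 1" using abs_Re_le_cmod Gb[OF kk] order_trans by blast
    show "\<bar>- Im (F k k' (px x))\<bar> \<le> 1" using abs_Im_le_cmod[of "F k k' (px x)"] Fb[OF kk, of "px x"] by linarith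
    show "\<bar>Im (G k k' (py y))\<bar> \<le> 1" using abs_Im_le_cmod Gb[OF kk] order_trans by blast
  qed
  have eq: "(\<Sum>k<K. \<Sum>k'<K. (1::real) + 1) = 2 * 4 ^ ?c"
    unfolding K_def by (simp add: power_mult_distrib[symmetric])
  show ?thesis using nb1 unfolding eq by (rule nuB_cong) (simp add: pf)
qed

lemma nuB_nonneg: "nuB a M \<Longrightarrow> 0 \<le> a"
  by (induction rule: nuB.induct) auto

lemma nuB_mult_r1:
  assumes "nuB b N" "\<And>x. \<bar>f x\<bar> \<le> 1" "\<And>y. \<bar>g y\<bar> \<le> 1"
  shows "nuB b (\<lambda>x y. f x * g y * N x y)"
  using assms(1)
proof (induction rule: nuB.induct)
  case (r1 f' g')
  have "nuB 1 (\<lambda>x y. (f x * f' x) * (g y * g' y))"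
    by (rule nuB.r1) (use assms(2,3) r1 in \<open>auto simp: abs_mult intro: mult_le_one\<close>)
  then show ?case by (rule nuB_cong) (simp add: mult_ac)
next
  case (add a M b N)
  then show ?case using nuB.add[OF add.IH] by (auto intro: nuB_cong simp: algebra_simps)
next
  case (scale a M c)
  then show ?case using nuB.scale[OF scale.IH, of c] by (auto intro: nuB_cong simp: algebra_simps)
next
  case (mono a M b)
  then show ?case using nuB.mono by blast
qed

lemma nuB_mult:
  assumes "nuB a M" "nuB b N"
  shows "nuB (a * b) (\<lambda>x y. M x y * N x y)"
  using assms(1)
proof (induction rule: nuB.induct)
  case (r1 f g)
  then show ?case using nuB_mult_r1[OF assms(2), of f g] by simp
next
  case (add a1 M1 a2 M2)
  then show ?case using nuB.add[OF add.IH] by (auto intro: nuB_cong simp: algebra_simps)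
next
  case (scale a M c)
  then show ?case using nuB.scale[OF scale.IH, of c] by (auto intro: nuB_cong simp: algebra_simps)
next
  case (mono a M a')
  have "0 \<le> b" using nuB_nonneg[OF assms(2)] .
  then have "a * b \<le> a' * b" using mono.hyps(2) by (simp add: mult_right_mono)
  then show ?case using nuB.mono[OF mono.IH] by blast
qed

lemma nuB_pow: "nuB a M \<Longrightarrow> nuB (a ^ j) (\<lambda>x y. M x y ^ j)"
proof (induction j)
  case 0 then show ?case using nuB_one by simp
next
  case (Suc j)
  then show ?case using nuB_mult[OF Suc.prems Suc.IH[OF Suc.prems]] by simp
qed

lemma nuB_one_minus: "nuB a M \<Longrightarrow> nuB (1 + a) (\<lambda>x y. 1 - M x y)"
proof -
  assume "nuB a M"
  then have "nuB (1 + \<bar>-1\<bar> * a) (\<lambda>x y. 1 + (-1) * M x y)"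
    by (intro nuB.add nuB_one nuB.scale)
  then have h: "nuB (1 + a) (\<lambda>x y. 1 + (-1) * M x y)" by simp
  show ?thesis by (rule nuB_cong[OF h]) simp
qed

lemma nuB_scale': "nuB a M \<Longrightarrow> \<bar>c\<bar> \<le> 1 \<Longrightarrow> nuB a (\<lambda>x y. c * M x y)"
proof -
  assume a: "nuB a M" "\<bar>c\<bar> \<le> 1"
  have "\<bar>c\<bar> * a \<le> a" using nuB_nonneg[OF a(1)] a(2) by (simp add: mult_left_le_one_le)
  then show ?thesis using nuB.mono[OF nuB.scale[OF a(1), of c]] by blast
qed

section \<open>Hadamard matrix\<close>

definition Had :: "nat set \<Rightarrow> nat set \<Rightarrow> real" where
  "Had I J = (\<Prod>j\<in>J. if j \<in> I then -1 else 1)"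

lemma Had_card: "finite J \<Longrightarrow> Had I J = (-1) ^ card (I \<inter> J)"
proof -
  assume f: "finite J"
  show ?thesis unfolding Had_def by (simp add: prod.If_cases[OF f] Int_commute)
qed

lemma Had_sym: "finite I \<Longrightarrow> finite J \<Longrightarrow> Had I J = Had J I"
  by (simp add: Had_card Int_commute)

lemma Had_sq: "Had I J * Had I J = 1"
  unfolding Had_def prod.distrib[symmetric] by (rule prod.neutral) simp

lemma Had_abs: "\<bar>Had I J\<bar> = 1"
  unfolding Had_def abs_prod by (rule prod.neutral) simp

lemma Had_orth:
  assumes "I \<subseteq> M" "I' \<subseteq> M" "finite M"
  shows "(\<Sum>J\<in>Pow M. Had I J * Had I' J) = (if I = I' then 2 ^ card M else 0)"
proof -
  define w where "w j = (if j \<in> I then -1 else 1) * (if j \<in> I' then -1 else (1::real))" for j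
  have "(\<Sum>J\<in>Pow M. Had I J * Had I' J) = (\<Sum>J\<in>Pow M. (\<Prod>j\<in>J. w j) * (\<Prod>j\<in>M - J. 1))"
    unfolding Had_def w_def by (simp add: prod.distrib)
  also have "\<dots> = (\<Prod>j\<in>M. w j + 1)" by (rule prod_add[OF assms(3), symmetric])
  also have "\<dots> = (if I = I' then 2 ^ card M else 0)"
  proof (cases "I = I'")
    case True
    then have "\<And>j. w j + 1 = 2" unfolding w_def by auto
    then show ?thesis using True by simp
  next
    case False
    then obtain j where j: "j \<in> M" "(j \<in> I) \<noteq> (j \<in> I')" using assms by blast
    then have "w j + 1 = 0" unfolding w_def by auto
    then show ?thesis using False j(1) assms(3) by (auto intro: prod_zero)
  qed
  finally show ?thesis .
qed

lemma amgm_abs: "t > 0 \<Longrightarrow> \<bar>v::real\<bar> \<le> (v\<^sup>2 / t + t) / 2"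
proof -
  assume t: "t > 0"
  have "0 \<le> (\<bar>v\<bar> - t)\<^sup>2" by simp
  then have "2 * \<bar>v\<bar> * t \<le> v\<^sup>2 + t\<^sup>2" by (simp add: power2_eq_square algebra_simps)
  then show ?thesis using t by (simp add: field_simps power2_eq_square)
qed

lemma card_Pow_lessThan: "card (Pow {..<m::nat}) = 2 ^ m"
  by (simp add: card_Pow)

lemma rank1_disc:
  fixes f g :: "nat set \<Rightarrow> real"
  assumes f: "\<And>I. \<bar>f I\<bar> \<le> 1" and g: "\<And>J. \<bar>g J\<bar> \<le> 1"
  shows "\<bar>\<Sum>I\<in>Pow {..<2*h}. \<Sum>J\<in>Pow {..<2*h}. Had I J * (f I * g J)\<bar> \<le> 8 ^ h"
proof -
  let ?m = "2*h" let ?X = "Pow {..<2*h}"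
  define hv where "hv I = (\<Sum>J\<in>?X. Had I J * g J)" for I
  have fX: "finite ?X" by simp
  have S2: "(\<Sum>I\<in>?X. (hv I)\<^sup>2) \<le> 16 ^ h"
  proof -
    have "(\<Sum>I\<in>?X. (hv I)\<^sup>2) = (\<Sum>I\<in>?X. \<Sum>J\<in>?X. \<Sum>J'\<in>?X. (g J * g J') * (Had J I * Had J' I))"
      unfolding hv_def power2_eq_square sum_product
      by (intro sum.cong refl) (simp add: Had_sym[of _ "_ :: nat set"] finite_subset mult_ac)
    also have "\<dots> = (\<Sum>J\<in>?X. \<Sum>J'\<in>?X. (g J * g J') * (\<Sum>I\<in>?X. Had J I * Had J' I))"
    proof -
      have "(\<Sum>I\<in>?X. \<Sum>J\<in>?X. \<Sum>J'\<in>?X. (g J * g J') * (Had J I * Had J' I))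
          = (\<Sum>J\<in>?X. \<Sum>I\<in>?X. \<Sum>J'\<in>?X. (g J * g J') * (Had J I * Had J' I))" by (rule sum.swap)
      also have "\<dots> = (\<Sum>J\<in>?X. \<Sum>J'\<in>?X. \<Sum>I\<in>?X. (g J * g J') * (Had J I * Had J' I))"
        by (rule sum.cong[OF refl], rule sum.swap)
      finally show ?thesis by (simp add: sum_distrib_left)
    qed
    also have "\<dots> = (\<Sum>J\<in>?X. \<Sum>J'\<in>?X. (g J * g J') * (if J = J' then 2 ^ ?m else 0))"
      by (intro sum.cong refl) (simp add: Had_orth)
    also have "\<dots> = (\<Sum>J\<in>?X. (g J)\<^sup>2 * 2 ^ ?m)"
      by (rule sum.cong[OF refl]) (simp add: if_distrib[of "\<lambda>z. _ * z"] sum.delta[OF fX] power2_eq_square cong: if_cong)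
    also have "\<dots> \<le> (\<Sum>J\<in>?X. 1 * 2 ^ ?m)"
    proof (rule sum_mono)
      fix J
      have "(g J)\<^sup>2 \<le> 1" using g[of J] by (simp add: abs_square_le_1)
      then show "(g J)\<^sup>2 * 2 ^ ?m \<le> 1 * 2 ^ ?m" by (intro mult_right_mono) auto
    qed
    also have "\<dots> = 16 ^ h" by (simp add: card_Pow_lessThan power_mult power_mult_distrib[symmetric])
    finally show ?thesis .
  qed
  have "\<bar>\<Sum>I\<in>?X. \<Sum>J\<in>?X. Had I J * (f I * g J)\<bar> = \<bar>\<Sum>I\<in>?X. f I * hv I\<bar>"
    unfolding hv_def by (simp add: sum_distrib_left mult_ac)
  also have "\<dots> \<le> (\<Sum>I\<in>?X. \<bar>f I * hv I\<bar>)" by (rule sum_abs)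
  also have "\<dots> \<le> (\<Sum>I\<in>?X. ((hv I)\<^sup>2 / 2 ^ h + 2 ^ h) / 2)"
  proof (rule sum_mono)
    fix I
    have "\<bar>f I * hv I\<bar> \<le> \<bar>hv I\<bar>" using f[of I] by (simp add: abs_mult mult_left_le_one_le)
    also have "\<dots> \<le> ((hv I)\<^sup>2 / 2 ^ h + 2 ^ h) / 2" by (rule amgm_abs) simp
    finally show "\<bar>f I * hv I\<bar> \<le> ((hv I)\<^sup>2 / 2 ^ h + 2 ^ h) / 2" .
  qed
  also have "\<dots> = ((\<Sum>I\<in>?X. (hv I)\<^sup>2) / 2 ^ h + 2 ^ ?m * 2 ^ h) / 2"
    by (simp add: sum_divide_distrib[symmetric] sum.distrib card_Pow_lessThan)
  also have "\<dots> \<le> (16 ^ h / 2 ^ h + 2 ^ ?m * 2 ^ h) / 2"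
    using S2 by (simp add: divide_right_mono)
  also have "\<dots> = 8 ^ h"
  proof -
    have "(16::real) ^ h = 8 ^ h * 2 ^ h" by (simp add: power_mult_distrib[symmetric])
    moreover have "(2::real) ^ (2*h) * 2 ^ h = 8 ^ h" by (simp add: power_mult power_mult_distrib[symmetric])
    ultimately show ?thesis by simp
  qed
  finally show ?thesis .
qed

lemma nuB_disc:
  fixes M :: "nat set \<Rightarrow> nat set \<Rightarrow> real"
  assumes "nuB a M"
  shows "\<bar>\<Sum>I\<in>Pow {..<2*h}. \<Sum>J\<in>Pow {..<2*h}. Had I J * M I J\<bar> \<le> a * 8 ^ h"
  using assms
proof (induction rule: nuB.induct)
  case (r1 f g)
  then show ?case using rank1_disc[of f g h] by simp
next
  case (add a M b N)
  have "\<bar>\<Sum>I\<in>Pow {..<2*h}. \<Sum>J\<in>Pow {..<2*h}. Had I J * (M I J + N I J)\<bar>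
      = \<bar>(\<Sum>I\<in>Pow {..<2*h}. \<Sum>J\<in>Pow {..<2*h}. Had I J * M I J) + (\<Sum>I\<in>Pow {..<2*h}. \<Sum>J\<in>Pow {..<2*h}. Had I J * N I J)\<bar>"
    by (simp add: distrib_left sum.distrib)
  also have "\<dots> \<le> a * 8 ^ h + b * 8 ^ h" using add.IH by linarith
  finally show ?case by (simp add: distrib_right)
next
  case (scale a M c)
  have "\<bar>\<Sum>I\<in>Pow {..<2*h}. \<Sum>J\<in>Pow {..<2*h}. Had I J * (c * M I J)\<bar>
      = \<bar>c\<bar> * \<bar>\<Sum>I\<in>Pow {..<2*h}. \<Sum>J\<in>Pow {..<2*h}. Had I J * M I J\<bar>"
    by (simp add: sum_distrib_left abs_mult[symmetric] mult_ac)
  also have "\<dots> \<le> \<bar>c\<bar> * (a * 8 ^ h)" using scale.IH by (simp add: mult_left_mono)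
  finally show ?case by (simp add: mult_ac)
next
  case (mono a M b)
  then show ?case by (meson order_trans mult_right_mono zero_le_power zero_le_numeral)
qed

definition amp :: "nat \<Rightarrow> real \<Rightarrow> real" where
  "amp r z = (\<Sum>j\<in>{Suc r..2*r}. of_nat (2*r choose j) * z ^ j * (1 - z) ^ (2*r - j))"

definition low :: "nat \<Rightarrow> real \<Rightarrow> real" where
  "low r z = (\<Sum>j\<in>{..r}. of_nat (2*r choose j) * z ^ j * (1 - z) ^ (2*r - j))"

lemma amp_low: "amp r z + low r z = 1"
proof -
  have "{..2*r} = {..r} \<union> {Suc r..2*r}" by auto
  moreover have "{..r} \<inter> {Suc r..2*r} = {}" by auto
  ultimately have "(\<Sum>j\<in>{..2*r}. of_nat (2*r choose j) * z ^ j * (1 - z) ^ (2*r - j)) = low r z + amp r z"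
    unfolding amp_def low_def by (simp add: sum.union_disjoint)
  moreover have "(\<Sum>j\<in>{..2*r}. of_nat (2*r choose j) * z ^ j * (1 - z) ^ (2*r - j)) = (z + (1 - z)) ^ (2*r)"
    by (rule binomial_ring[symmetric])
  ultimately show ?thesis by simp
qed

lemma amp_nonneg: "0 \<le> z \<Longrightarrow> z \<le> 1 \<Longrightarrow> 0 \<le> amp r z"
  unfolding amp_def by (intro sum_nonneg mult_nonneg_nonneg) auto

lemma low_nonneg: "0 \<le> z \<Longrightarrow> z \<le> 1 \<Longrightarrow> 0 \<le> low r z"
  unfolding low_def by (intro sum_nonneg mult_nonneg_nonneg) auto

lemma pow_bound:
  fixes s t :: real
  assumes "0 \<le> s" "s \<le> t" "i \<le> r"
  shows "t ^ i * s ^ (2*r - i) \<le> (t * s) ^ r"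
proof -
  have "t ^ i * s ^ (2*r - i) = (t * s) ^ i * (s * s) ^ (r - i)"
  proof -
    have "2*r - i = i + 2 * (r - i)" using assms(3) by simp
    then have "s ^ (2*r - i) = s ^ i * (s * s) ^ (r - i)" by (simp add: power_add power_mult power2_eq_square)
    then show ?thesis by (simp add: power_mult_distrib mult_ac)
  qed
  also have "\<dots> \<le> (t * s) ^ i * (t * s) ^ (r - i)"
    using assms by (intro mult_left_mono power_mono mult_right_mono) auto
  also have "\<dots> = (t * s) ^ r" using assms(3) by (simp add: power_add[symmetric])
  finally show ?thesis .
qed

lemma zz_bound: "z \<le> 1/3 \<or> 2/3 \<le> z \<Longrightarrow> z * (1 - z) \<le> (2/9::real)"
proof -
  assume "z \<le> 1/3 \<or> 2/3 \<le> z"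
  then have "0 \<le> (z - 1/3) * (z - 2/3)" by (auto intro: mult_nonneg_nonneg mult_nonpos_nonpos)
  moreover have "(z - 1/3) * (z - 2/3) = z * z - z + 2/9" by (simp add: algebra_simps divide_simps)
  ultimately show ?thesis by (simp add: algebra_simps)
qed

lemma choose_sum_le: "(\<Sum>j\<in>J. real (2*r choose j)) \<le> 4 ^ r" if "J \<subseteq> {..2*r}"
proof -
  have "(\<Sum>j\<in>J. real (2*r choose j)) \<le> (\<Sum>j\<in>{..2*r}. real (2*r choose j))"
    by (rule sum_mono2) (use that in auto)
  also have "\<dots> = real (\<Sum>j\<le>2*r. (2*r choose j))" by simp
  also have "\<dots> = 4 ^ r" by (simp add: choose_row_sum power_mult)
  finally show ?thesis .
qed

lemma low_small: assumes "2/3 \<le> z" "z \<le> 1" shows "low r z \<le> (8/9) ^ r"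
proof -
  have "low r z \<le> (\<Sum>j\<in>{..r}. real (2*r choose j) * (2/9) ^ r)"
    unfolding low_def
  proof (rule sum_mono)
    fix j assume j: "j \<in> {..r}"
    have "z ^ j * (1 - z) ^ (2*r - j) \<le> (z * (1 - z)) ^ r"
      by (rule pow_bound) (use assms j in auto)
    also have "\<dots> \<le> (2/9) ^ r" using zz_bound[of z] assms by (intro power_mono) auto
    finally show "of_nat (2*r choose j) * z ^ j * (1 - z) ^ (2*r - j) \<le> real (2*r choose j) * (2/9) ^ r"
      by (simp add: mult.assoc mult_left_mono)
  qed
  also have "\<dots> = (\<Sum>j\<in>{..r}. real (2*r choose j)) * (2/9) ^ r" by (simp add: sum_distrib_right)
  also have "\<dots> \<le> 4 ^ r * (2/9) ^ r" by (intro mult_right_mono choose_sum_le) auto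
  also have "\<dots> = (8/9) ^ r" by (simp add: power_mult_distrib[symmetric])
  finally show ?thesis .
qed

lemma amp_small: assumes "0 \<le> z" "z \<le> 1/3" shows "amp r z \<le> (8/9) ^ r"
proof -
  have "amp r z \<le> (\<Sum>j\<in>{Suc r..2*r}. real (2*r choose j) * (2/9) ^ r)"
    unfolding amp_def
  proof (rule sum_mono)
    fix j assume j: "j \<in> {Suc r..2*r}"
    have "(1 - z) ^ (2*r - j) * z ^ (2*r - (2*r - j)) \<le> ((1 - z) * z) ^ r"
      by (rule pow_bound) (use assms j in auto)
    moreover have "2*r - (2*r - j) = j" using j by auto
    ultimately have "z ^ j * (1 - z) ^ (2*r - j) \<le> (z * (1 - z)) ^ r" by (simp add: mult_ac)
    also have "\<dots> \<le> (2/9) ^ r" using zz_bound[of z] assms by (intro power_mono) auto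
    finally show "of_nat (2*r choose j) * z ^ j * (1 - z) ^ (2*r - j) \<le> real (2*r choose j) * (2/9) ^ r"
      by (simp add: mult.assoc mult_left_mono)
  qed
  also have "\<dots> = (\<Sum>j\<in>{Suc r..2*r}. real (2*r choose j)) * (2/9) ^ r" by (simp add: sum_distrib_right)
  also have "\<dots> \<le> 4 ^ r * (2/9) ^ r" by (intro mult_right_mono choose_sum_le) auto
  also have "\<dots> = (8/9) ^ r" by (simp add: power_mult_distrib[symmetric])
  finally show ?thesis .
qed

lemma amp_err:
  assumes "0 \<le> z" "z \<le> 1" "e \<Longrightarrow> 2/3 \<le> z" "\<not> e \<Longrightarrow> z \<le> 1/3"
  shows "\<bar>amp r z - (if e then 1 else 0)\<bar> \<le> (8/9) ^ r"
proof (cases e)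
  case True
  then have "low r z \<le> (8/9) ^ r" using low_small assms by auto
  then show ?thesis using True amp_low[of r z] low_nonneg[OF assms(1,2), of r] by auto
next
  case False
  then have "amp r z \<le> (8/9) ^ r" using amp_small assms by auto
  then show ?thesis using False amp_nonneg[OF assms(1,2), of r] by auto
qed

lemma nuB_amp:
  assumes "nuB a M"
  shows "nuB (4 ^ r * (1 + a) ^ (2*r)) (\<lambda>x y. amp r (M x y))"
proof -
  have a0: "0 \<le> a" using nuB_nonneg[OF assms] .
  have "nuB (\<Sum>j\<in>{Suc r..2*r}. real (2*r choose j) * (1 + a) ^ (2*r))
          (\<lambda>x y. \<Sum>j\<in>{Suc r..2*r}. of_nat (2*r choose j) * (M x y ^ j * (1 - M x y) ^ (2*r - j)))"
  proof (rule nuB_sum)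
    fix j assume j: "j \<in> {Suc r..2*r}"
    have "nuB (\<bar>real (2*r choose j)\<bar> * (a ^ j * (1 + a) ^ (2*r - j)))
        (\<lambda>x y. real (2*r choose j) * (M x y ^ j * (1 - M x y) ^ (2*r - j)))"
      by (intro nuB.scale nuB_mult nuB_pow nuB_one_minus assms)
    moreover have "\<bar>real (2*r choose j)\<bar> * (a ^ j * (1 + a) ^ (2*r - j)) \<le> real (2*r choose j) * (1 + a) ^ (2*r)"
    proof -
      have "a ^ j \<le> (1 + a) ^ j" using a0 by (intro power_mono) auto
      then have "a ^ j * (1 + a) ^ (2*r - j) \<le> (1 + a) ^ j * (1 + a) ^ (2*r - j)"
        using a0 by (intro mult_right_mono) auto
      also have "\<dots> = (1 + a) ^ (2*r)" using j by (simp add: power_add[symmetric])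
      finally show ?thesis by (simp add: mult_left_mono)
    qed
    ultimately show "nuB (real (2*r choose j) * (1 + a) ^ (2*r))
          (\<lambda>x y. of_nat (2*r choose j) * (M x y ^ j * (1 - M x y) ^ (2*r - j)))"
      using nuB.mono by auto
  qed simp
  moreover have "(\<Sum>j\<in>{Suc r..2*r}. real (2*r choose j) * (1 + a) ^ (2*r)) \<le> 4 ^ r * (1 + a) ^ (2*r)"
    unfolding sum_distrib_right[symmetric] using a0 by (intro mult_right_mono choose_sum_le) auto
  ultimately have "nuB (4 ^ r * (1 + a) ^ (2*r))
          (\<lambda>x y. \<Sum>j\<in>{Suc r..2*r}. of_nat (2*r choose j) * (M x y ^ j * (1 - M x y) ^ (2*r - j)))"
    using nuB.mono by blast
  then show ?thesis by (rule nuB_cong) (simp add: amp_def mult.assoc)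
qed

lemma parity_sum:
  "s \<le> m \<Longrightarrow> (\<Sum>t\<in>{1..m}. (-1::real) ^ (t+1) * (if t \<le> s then 1 else 0)) = (1 - (-1) ^ s) / 2"
proof -
  assume sm: "s \<le> m"
  have "(\<Sum>t\<in>{1..m}. (-1::real) ^ (t+1) * (if t \<le> s then 1 else 0)) = (\<Sum>t\<in>{1..s}. (-1::real) ^ (t+1))"
  proof -
    have u: "{1..m} = {1..s} \<union> {s<..m}" "{1..s} \<inter> {s<..m} = {}" using sm by auto
    have "(\<Sum>t\<in>{1..m}. (-1::real) ^ (t+1) * (if t \<le> s then 1 else 0))
        = (\<Sum>t\<in>{1..s}. (-1::real) ^ (t+1) * (if t \<le> s then 1 else 0)) + (\<Sum>t\<in>{s<..m}. (-1::real) ^ (t+1) * (if t \<le> s then 1 else 0))"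
      unfolding u(1) by (rule sum.union_disjoint) (use u(2) in auto)
    also have "(\<Sum>t\<in>{1..s}. (-1::real) ^ (t+1) * (if t \<le> s then 1 else 0)) = (\<Sum>t\<in>{1..s}. (-1::real) ^ (t+1))"
      by (intro sum.cong refl) auto
    also have "(\<Sum>t\<in>{s<..m}. (-1::real) ^ (t+1) * (if t \<le> s then 1 else 0)) = 0"
      by (intro sum.neutral) auto
    finally show ?thesis by simp
  qed
  also have "\<dots> = (1 - (-1) ^ s) / 2"
    by (induction s) (auto simp: field_simps)
  finally show ?thesis .
qed

lemma arith_aux: "t \<le> N2 \<Longrightarrow> n \<le> 2*N2 \<Longrightarrow> 2*N2 \<le> n+1 \<Longrightarrow> (n \<le> 2*(k + (N2 - t))) = (t \<le> (k::nat))"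
  by arith

lemma maj_pad:
  fixes I J :: "nat set"
  assumes IJ: "I \<subseteq> {..<m}" "J \<subseteq> {..<m}" and mn: "4 * m \<le> n" and t: "1 \<le> t" "t \<le> m"
  defines "p \<equiv> (n + 1) div 2 - t"
  shows "MAJ n (\<lambda>i. (i < m \<and> i \<in> I) \<or> (m \<le> i \<and> i < m + p)) (\<lambda>i. (i < m \<and> i \<in> J) \<or> (m \<le> i \<and> i < m + p))
     \<longleftrightarrow> t \<le> card (I \<inter> J)"
proof -
  have mp: "m + p \<le> n" unfolding p_def using mn t by linarith
  have "{i. i < n \<and> ((i < m \<and> i \<in> I) \<or> (m \<le> i \<and> i < m + p)) \<and> ((i < m \<and> i \<in> J) \<or> (m \<le> i \<and> i < m + p))}
      = (I \<inter> J) \<union> {m..<m+p}" using IJ mp by auto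
  moreover have "card ((I \<inter> J) \<union> {m..<m+p}) = card (I \<inter> J) + p"
  proof -
    have "finite (I \<inter> J)" using IJ finite_subset by blast
    moreover have "(I \<inter> J) \<inter> {m..<m+p} = {}" using IJ by auto
    ultimately show ?thesis by (simp add: card_Un_disjoint)
  qed
  ultimately have c: "card {i. i < n \<and> ((i < m \<and> i \<in> I) \<or> (m \<le> i \<and> i < m + p)) \<and> ((i < m \<and> i \<in> J) \<or> (m \<le> i \<and> i < m + p))}
      = card (I \<inter> J) + p" by simp
  have "t \<le> (n+1) div 2" using mn t by linarith
  moreover have "n \<le> 2 * ((n+1) div 2)" "2 * ((n+1) div 2) \<le> n + 1" by linarith+
  ultimately have "(n \<le> 2 * (card (I \<inter> J) + p)) = (t \<le> card (I \<inter> J))" unfolding p_def by (rule arith_aux)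
  then show ?thesis unfolding MAJ_def c .
qed

lemma main_ineq:
  assumes comp: "computes n (MAJ n) P" and mn: "4 * (2*h) \<le> n"
    and del: "(8/9) ^ r * (4 * (2*h)) \<le> (1::real)"
  shows "(2::real) ^ h \<le> 2 + 4 * (2*h) * (4 ^ r * (1 + 2 * 4 ^ length (rounds P)) ^ (2*r))"
proof -
  let ?m = "2*h" and ?c = "length (rounds P)"
  let ?X = "Pow {..<2*h}"
  define B where "B = (4::real) ^ r * (1 + 2 * 4 ^ ?c) ^ (2*r)"
  define \<delta> where "\<delta> = ((8::real)/9) ^ r"
  define pt where "pt t = (n + 1) div 2 - t" for t
  define pad where "pad t I = (\<lambda>i. (i < ?m \<and> i \<in> I) \<or> (?m \<le> i \<and> i < ?m + pt t))" for t I
  define Pm where "Pm t I J = prob_one n P (pad t I) (pad t J)" for t I J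
  define Q where "Q I J = (\<Sum>t\<in>{1..?m}. (-1) ^ (t+1) * amp r (Pm t I J))" for I J
  define M' where "M' I J = 1 - 2 * Q I J" for I J
  have wf: "wf_protocol n P" using comp unfolding computes_def by blast
  have nP: "nuB (2 * 4 ^ ?c) (Pm t)" for t
    unfolding Pm_def using prob_nuB[OF wf, of "pad t" "pad t"] by simp
  have nA: "nuB B (\<lambda>I J. amp r (Pm t I J))" for t
    unfolding B_def using nuB_amp[OF nP[of t], of r] by simp
  have nQ: "nuB (\<Sum>t\<in>{1..?m}. B) Q"
    unfolding Q_def by (intro nuB_sum nuB_scale' nA) auto
  have nM: "nuB (1 + 2 * (?m * B)) M'"
  proof -
    have "nuB (1 + \<bar>-2\<bar> * (\<Sum>t\<in>{1..?m}. B)) (\<lambda>I J. 1 + (-2) * Q I J)"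
      by (intro nuB.add nuB_one nuB.scale nQ)
    then show ?thesis by (rule nuB_cong[where a = "1 + \<bar>-2\<bar> * (\<Sum>t\<in>{1..?m}. B)", THEN nuB.mono]) (auto simp: M'_def)
  qed
  have disc: "\<bar>\<Sum>I\<in>?X. \<Sum>J\<in>?X. Had I J * M' I J\<bar> \<le> (1 + 2 * (?m * B)) * 8 ^ h"
    by (rule nuB_disc[OF nM])
  have pw: "1/2 \<le> Had I J * M' I J" if I: "I \<in> ?X" and J: "J \<in> ?X" for I J
  proof -
    let ?s = "card (I \<inter> J)"
    have fI: "finite J" using J finite_subset by auto
    have sm: "?s \<le> ?m"
    proof -
      have "?s \<le> card {..<?m}" using I by (intro card_mono) auto
      then show ?thesis by simp
    qed
    have err: "\<bar>amp r (Pm t I J) - (if t \<le> ?s then 1 else 0)\<bar> \<le> \<delta>" if t: "t \<in> {1..?m}" for t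
    proof -
      have maj: "MAJ n (pad t I) (pad t J) = (t \<le> ?s)"
        unfolding pad_def pt_def by (rule maj_pad) (use I J mn t in auto)
      have c: "if MAJ n (pad t I) (pad t J) then 2/3 \<le> Pm t I J else Pm t I J \<le> 1/3"
        using comp unfolding computes_def Pm_def by blast
      show ?thesis unfolding \<delta>_def
        by (rule amp_err) (use c maj prob_one_bounds[OF wf] in \<open>auto simp: Pm_def split: if_splits\<close>)
    qed
    have hadp: "Had I J = 1 - 2 * (\<Sum>t\<in>{1..?m}. (-1::real) ^ (t+1) * (if t \<le> ?s then 1 else 0))"
      using parity_sum[OF sm] Had_card[OF fI, of I] by simp
    have "\<bar>M' I J - Had I J\<bar> = 2 * \<bar>\<Sum>t\<in>{1..?m}. (-1) ^ (t+1) * (amp r (Pm t I J) - (if t \<le> ?s then 1 else 0))\<bar>"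
    proof -
      have e1: "M' I J - Had I J = -2 * ((\<Sum>t\<in>{1..?m}. (-1) ^ (t+1) * amp r (Pm t I J)) - (\<Sum>t\<in>{1..?m}. (-1::real) ^ (t+1) * (if t \<le> ?s then 1 else 0)))"
        unfolding M'_def Q_def hadp by (simp add: algebra_simps)
      have e2: "(\<Sum>t\<in>{1..?m}. (-1) ^ (t+1) * amp r (Pm t I J)) - (\<Sum>t\<in>{1..?m}. (-1::real) ^ (t+1) * (if t \<le> ?s then 1 else 0))
          = (\<Sum>t\<in>{1..?m}. (-1) ^ (t+1) * (amp r (Pm t I J) - (if t \<le> ?s then 1 else 0)))"
        by (simp only: sum_subtractf[symmetric] right_diff_distrib)
      show ?thesis unfolding e1 e2 by (simp add: abs_mult)
    qed
    also have "\<dots> \<le> 2 * (\<Sum>t\<in>{1..?m}. \<bar>(-1) ^ (t+1) * (amp r (Pm t I J) - (if t \<le> ?s then 1 else 0))\<bar>)"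
      by (intro mult_left_mono sum_abs) simp
    also have "\<dots> \<le> 2 * (\<Sum>t\<in>{1..?m}. \<delta>)"
      using err by (intro mult_left_mono sum_mono) (auto simp: abs_mult)
    also have "\<dots> = 2 * ?m * \<delta>" by simp
    also have "\<dots> \<le> 1/2" using del unfolding \<delta>_def by (simp add: field_simps)
    finally have d: "\<bar>M' I J - Had I J\<bar> \<le> 1/2" .
    have "Had I J * M' I J = Had I J * Had I J + Had I J * (M' I J - Had I J)" by (simp add: algebra_simps)
    also have "Had I J * Had I J = 1" by (rule Had_sq)
    finally have e: "Had I J * M' I J = 1 + Had I J * (M' I J - Had I J)" .
    have "\<bar>Had I J * (M' I J - Had I J)\<bar> \<le> 1/2" using d by (simp add: abs_mult Had_abs)
    then show ?thesis using e by linarith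
  qed
  have "(\<Sum>I\<in>?X. \<Sum>J\<in>?X. (1/2::real)) \<le> (\<Sum>I\<in>?X. \<Sum>J\<in>?X. Had I J * M' I J)"
    using pw by (intro sum_mono) auto
  moreover have "(\<Sum>I\<in>?X. \<Sum>J\<in>?X. (1/2::real)) = 16 ^ h / 2"
    by (simp add: card_Pow_lessThan power_mult power_mult_distrib[symmetric])
  ultimately have "16 ^ h / 2 \<le> (1 + 2 * (?m * B)) * 8 ^ h" using disc by linarith
  moreover have "(16::real) ^ h = 2 ^ h * 8 ^ h" by (simp add: power_mult_distrib[symmetric])
  ultimately have "2 ^ h * 8 ^ h \<le> (2 + 4 * (?m * B)) * (8::real) ^ h" by (simp add: algebra_simps)
  then have "2 ^ h \<le> 2 + 4 * (?m * B)" by simp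
  then show ?thesis unfolding B_def by (simp add: mult_ac)
qed

definition idU :: qop where "idU c a = (if c = a then 1 else 0)"

lemma idU_unitary: assumes "finite S" shows "unitary_on S idU"
  unfolding unitary_on_def
proof (intro ballI)
  fix a a' assume a: "a \<in> Pow S" "a' \<in> Pow S"
  have "(\<Sum>c\<in>Pow S. cnj (idU c a) * idU c a') = (\<Sum>c\<in>Pow S. if c = a then (if a = a' then 1 else 0) else 0)"
    unfolding idU_def by (intro sum.cong refl) auto
  also have "\<dots> = (if a = a' then 1 else 0)" using a assms by (subst sum.delta) auto
  finally show "(\<Sum>c\<in>Pow S. cnj (idU c a) * idU c a') = (if a = a' then 1 else 0)" .
qed

lemma apply_idU: assumes "finite S" shows "apply_op S idU \<psi> = \<psi>"
proof
  fix b
  have "apply_op S idU \<psi> b = (\<Sum>c\<in>Pow S. if c = b \<inter> S then \<psi> (c \<union> (b - S)) else 0)"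
    unfolding apply_op_def idU_def by (intro sum.cong refl) auto
  also have "\<dots> = \<psi> ((b \<inter> S) \<union> (b - S))"
    using assms by (subst sum.delta) auto
  also have "(b \<inter> S) \<union> (b - S) = b" by auto
  finally show "apply_op S idU \<psi> b = \<psi> b" .
qed

lemma id_rounds:
  "distinct L \<Longrightarrow> set L \<inter> A = {} \<Longrightarrow> set L \<subseteq> {0..<N} \<Longrightarrow>
   valid_rounds N (map (\<lambda>q. (False, idU, q)) L @ rest) A = valid_rounds N rest (A \<union> set L)
   \<and> exec_rounds N (map (\<lambda>q. (False, idU, q)) L @ rest) A \<psi> = exec_rounds N rest (A \<union> set L) \<psi>"
proof (induction L arbitrary: A)
  case Nil then show ?case by simp
next
  case (Cons q L)
  have fin: "finite ({0..<N} - A)" by simp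
  have e: "A \<union> {q} \<union> set L = A \<union> set (q # L)" by auto
  from Cons.prems have "q \<in> {0..<N} - A" by auto
  moreover have "distinct L" "set L \<inter> (A \<union> {q}) = {}" "set L \<subseteq> {0..<N}" using Cons.prems by auto
  note ih = Cons.IH[OF this]
  ultimately show ?case using idU_unitary[OF fin] by (simp add: apply_idU[OF fin] e)
qed

definition majset :: "nat \<Rightarrow> nat set \<Rightarrow> bool" where
  "majset n a \<longleftrightarrow> n \<le> 2 * card {i. i < n \<and> i \<in> a \<and> n + i \<in> a}"

definition sig :: "nat \<Rightarrow> nat set \<Rightarrow> nat set" where
  "sig n a = (if majset n a then (if 2*n \<in> a then a - {2*n} else insert (2*n) a) else a)"

lemma majset_flip: "majset n (a - {2*n}) = majset n a" "majset n (insert (2*n) a) = majset n a"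
proof -
  have "{i. i < n \<and> i \<in> a - {2*n} \<and> n + i \<in> a - {2*n}} = {i. i < n \<and> i \<in> a \<and> n + i \<in> a}" by auto
  then show "majset n (a - {2*n}) = majset n a" unfolding majset_def by simp
  have "{i. i < n \<and> i \<in> insert (2*n) a \<and> n + i \<in> insert (2*n) a} = {i. i < n \<and> i \<in> a \<and> n + i \<in> a}" by auto
  then show "majset n (insert (2*n) a) = majset n a" unfolding majset_def by simp
qed

lemma sig_sig: "sig n (sig n a) = a"
  unfolding sig_def by (auto simp: majset_flip)

lemma sig_Pow: "a \<subseteq> {0..<2*n+1} \<Longrightarrow> sig n a \<subseteq> {0..<2*n+1}"
  unfolding sig_def by auto

definition sigU :: "nat \<Rightarrow> qop" where "sigU n c a = (if c = sig n a then 1 else 0)"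

lemma sigU_unitary: "unitary_on {0..<2*n+1} (sigU n)"
  unfolding unitary_on_def
proof (intro ballI)
  fix a a' assume a: "a \<in> Pow {0..<2*n+1}" and a': "a' \<in> Pow {0..<2*n+1}"
  have "(\<Sum>c\<in>Pow {0..<2*n+1}. cnj (sigU n c a) * sigU n c a')
      = (\<Sum>c\<in>Pow {0..<2*n+1}. if c = sig n a then (if sig n a = sig n a' then 1 else 0) else 0)"
    unfolding sigU_def by (intro sum.cong refl) auto
  also have "\<dots> = (if sig n a = sig n a' then 1 else 0)"
    using sig_Pow a by (subst sum.delta) auto
  also have "\<dots> = (if a = a' then 1 else 0)" using sig_sig by metis
  finally show "(\<Sum>c\<in>Pow {0..<2*n+1}. cnj (sigU n c a) * sigU n c a') = (if a = a' then 1 else 0)" .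
qed

lemma apply_sigU:
  assumes "b \<subseteq> {0..<2*n+1}"
  shows "apply_op {0..<2*n+1} (sigU n) \<psi> b = \<psi> (sig n b)"
proof -
  have "apply_op {0..<2*n+1} (sigU n) \<psi> b = (\<Sum>c\<in>Pow {0..<2*n+1}. if c = sig n b then \<psi> c else 0)"
    unfolding apply_op_def sigU_def
  proof (intro sum.cong refl)
    fix c assume "c \<in> Pow {0..<2*n+1}"
    have e1: "b \<inter> {0..<2*n+1} = b" "b - {0..<2*n+1} = {}" using assms by auto
    have e2: "(b = sig n c) = (c = sig n b)" using sig_sig by metis
    show "(if b \<inter> {0..<2*n+1} = sig n c then 1 else 0) * \<psi> (c \<union> (b - {0..<2*n+1})) = (if c = sig n b then \<psi> c else 0)"
      unfolding e1 e2 by simp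
  qed
  also have "\<dots> = \<psi> (sig n b)" using sig_Pow[OF assms] by (subst sum.delta) auto
  finally show ?thesis .
qed

definition majP :: "nat \<Rightarrow> qprotocol" where
  "majP n = \<lparr> nqubits = 2*n+1, alice_init = {0..<n} \<union> {2*n},
     rounds = map (\<lambda>q. (False, idU, q)) [n..<2*n] @ [(True, sigU n, 2*n)], out_qubit = 2*n \<rparr>"

lemma majP_rounds:
  "valid_rounds (2*n+1) (rounds (majP n)) (alice_init (majP n))
   \<and> exec_rounds (2*n+1) (rounds (majP n)) (alice_init (majP n)) \<psi> = apply_op {0..<2*n+1} (sigU n) \<psi>"
proof -
  let ?L = "[n..<2*n]" and ?A0 = "{0..<n} \<union> {2*n}"
  have L: "distinct ?L" "set ?L \<inter> ?A0 = {}" "set ?L \<subseteq> {0..<2*n+1}" by auto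
  have Af: "?A0 \<union> set ?L = {0..<2*n+1}" by auto
  have ir: "valid_rounds (2*n+1) (map (\<lambda>q. (False, idU, q)) ?L @ [(True, sigU n, 2*n)]) ?A0 = valid_rounds (2*n+1) [(True, sigU n, 2*n)] {0..<2*n+1}
   \<and> exec_rounds (2*n+1) (map (\<lambda>q. (False, idU, q)) ?L @ [(True, sigU n, 2*n)]) ?A0 \<psi> = exec_rounds (2*n+1) [(True, sigU n, 2*n)] {0..<2*n+1} \<psi>"
    using id_rounds[OF L, of "[(True, sigU n, 2*n)]"] unfolding Af .
  have r: "rounds (majP n) = map (\<lambda>q. (False, idU, q)) ?L @ [(True, sigU n, 2*n)]" "alice_init (majP n) = ?A0"
    unfolding majP_def by simp_all
  have v1: "valid_rounds (2*n+1) [(True, sigU n, 2*n)] {0..<2*n+1}"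
    using sigU_unitary[of n] by simp
  have e1: "exec_rounds (2*n+1) [(True, sigU n, 2*n)] {0..<2*n+1} \<psi> = apply_op {0..<2*n+1} (sigU n) \<psi>"
    by simp
  show ?thesis unfolding r using ir v1 e1 by simp
qed

lemma majP_wf: "wf_protocol n (majP n)"
proof -
  have "{n..<2*n} \<inter> ({0..<n} \<union> {2*n}) = {}" by auto
  then show ?thesis unfolding wf_protocol_def using majP_rounds[of n]
    by (simp add: majP_def subset_insertI)
qed

lemma majP_final:
  assumes b: "b \<subseteq> {0..<2*n+1}"
  shows "final_state n (majP n) x y b = init_state n x y (sig n b)"
proof -
  have "nqubits (majP n) = 2*n+1" by (simp add: majP_def)
  then have "final_state n (majP n) x y b = apply_op {0..<2*n+1} (sigU n) (init_state n x y) b"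
    unfolding final_state_def using majP_rounds[of n] by simp
  also have "\<dots> = init_state n x y (sig n b)" by (rule apply_sigU[OF b])
  finally show ?thesis .
qed

lemma majP_prob: "prob_one n (majP n) x y = (if MAJ n x y then 1 else 0)"
proof -
  define b0 where "b0 = {i. i < n \<and> x i} \<union> {n + i |i. i < n \<and> y i}"
  have fs: "final_state n (majP n) x y b = (if b = sig n b0 then 1 else 0)" if b: "b \<subseteq> {0..<2*n+1}" for b
  proof -
    have "(sig n b = b0) = (b = sig n b0)" using sig_sig by metis
    then show ?thesis unfolding majP_final[OF b] init_state_def b0_def[symmetric] by simp
  qed
  have b0: "b0 \<subseteq> {0..<2*n+1}" "2*n \<notin> b0" unfolding b0_def by auto
  have cnt: "{i. i < n \<and> i \<in> b0 \<and> n + i \<in> b0} = {i. i < n \<and> x i \<and> y i}" unfolding b0_def by auto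
  have ms: "majset n b0 = MAJ n x y" unfolding majset_def MAJ_def cnt by simp
  have sb0: "sig n b0 \<in> Pow {0..<2*n+1}" using sig_Pow[OF b0(1)] by simp
  have q: "nqubits (majP n) = 2*n+1" "out_qubit (majP n) = 2*n" by (simp_all add: majP_def)
  have "prob_one n (majP n) x y = (\<Sum>b\<in>{b\<in>Pow {0..<2*n+1}. 2*n \<in> b}. (cmod (if b = sig n b0 then 1 else 0))\<^sup>2)"
    unfolding prob_one_def q by (intro sum.cong refl) (simp add: fs)
  also have "\<dots> = (\<Sum>b\<in>{b\<in>Pow {0..<2*n+1}. 2*n \<in> b}. if b = sig n b0 then 1 else 0)"
    by (intro sum.cong refl) simp
  also have "\<dots> = (if sig n b0 \<in> {b\<in>Pow {0..<2*n+1}. 2*n \<in> b} then 1 else 0)"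
    by (rule sum.delta) simp
  also have "\<dots> = (if 2*n \<in> sig n b0 then 1 else 0)" using sb0 by simp
  also have "(2*n \<in> sig n b0) = majset n b0" using b0(2) unfolding sig_def by simp
  finally show ?thesis unfolding ms .
qed

lemma majP_computes: "computes n (MAJ n) (majP n)"
  unfolding computes_def using majP_wf majP_prob by simp

lemma BQC_exists: "\<exists>P. computes n (MAJ n) P \<and> length (rounds P) = BQC n (MAJ n)"
  unfolding BQC_def by (rule LeastI_ex) (use majP_computes in blast)

definition Xp :: "nat \<Rightarrow> real" where
  "Xp n = (real n/8 - 1) * ln 2 - ln (10 * real n) - (ln (4 * real n) / ln (9/8) + 1) * ln 36"

definition gg :: "nat \<Rightarrow> real" where
  "gg n = Xp n / ((ln (4 * real n) / ln (9/8) + 1) * ln 16)"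

lemma per_n:
  assumes n16: "16 \<le> n" and X0: "0 \<le> Xp n"
  shows "gg n \<le> real (BQC n (MAJ n))"
proof -
  obtain P where comp: "computes n (MAJ n) P" and len: "length (rounds P) = BQC n (MAJ n)"
    using BQC_exists by blast
  define c where "c = BQC n (MAJ n)"
  define h where "h = n div 8"
  define L where "L = ln (4 * real n) / ln (9/8)"
  define r where "r = nat \<lceil>L\<rceil>"
  have h1: "1 \<le> h" unfolding h_def using n16 by simp
  have h8: "8 * h \<le> n" unfolding h_def by simp
  have hlow: "real n / 8 - 1 \<le> real h"
  proof -
    have "n < 8 * h + 8" unfolding h_def by linarith
    then have "real n < 8 * real h + 8" by linarith
    then show ?thesis by simp
  qed
  have hn: "real h \<le> real n" using h8 by simp
  have ln98: "0 < ln (9/8::real)" by simp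
  have L0: "0 < L" unfolding L_def using n16 by (intro divide_pos_pos ln98) simp
  have rr: "real r = of_int \<lceil>L\<rceil>" unfolding r_def using L0 by simp
  have rL: "L \<le> real r" unfolding rr by (rule le_of_int_ceiling)
  have rR: "real r \<le> L + 1" unfolding rr by (rule of_int_ceiling_le_add_one)
  have r0: "0 < real r" using L0 rL by linarith
  have pow98: "4 * real n \<le> (9/8) ^ r"
  proof -
    have "ln (4 * real n) = L * ln (9/8)" unfolding L_def using ln98 by simp
    also have "\<dots> \<le> real r * ln (9/8)" using rL ln98 by (simp add: mult_right_mono)
    also have "\<dots> = ln ((9/8) ^ r)" by (simp add: ln_realpow)
    finally show ?thesis using n16 by (subst (asm) ln_le_cancel_iff) auto
  qed
  have D: "0 < (9/8::real) ^ r" by simp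
  have h8r: "8 * real h \<le> real n" using h8 by (metis of_nat_le_iff of_nat_mult of_nat_numeral)
  have del: "(8/9) ^ r * (4 * (2 * real h)) \<le> (1::real)"
  proof -
    have e: "(8/9::real) ^ r = 1 / (9/8) ^ r" by (simp add: power_divide)
    have "4 * (2 * real h) \<le> (9/8) ^ r" using h8r pow98 by simp
    then show ?thesis unfolding e using D by (simp add: divide_le_eq)
  qed
  have h8': "4 * (2*h) \<le> n" using h8 by simp
  have mi: "(2::real) ^ h \<le> 2 + 4 * (2 * real h) * (4 ^ r * (1 + 2 * 4 ^ length (rounds P)) ^ (2*r))"
    by (rule main_ineq[OF comp h8' del])
  have c4: "(1::real) \<le> 4 ^ c" by (rule one_le_power) simp
  have "(1 + 2 * 4 ^ c :: real) ^ (2*r) \<le> (3 * 4 ^ c) ^ (2*r)"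
    by (rule power_mono) (use c4 in linarith)+
  also have "(3 * 4 ^ c :: real) ^ (2*r) = 9 ^ r * 16 ^ (r * c)"
  proof -
    have "(3 * 4 ^ c :: real) ^ (2*r) = ((3 * 4 ^ c) ^ 2) ^ r" by (simp add: power_mult)
    also have "((3 * 4 ^ c :: real) ^ 2) = 9 * 16 ^ c"
      by (simp add: power_mult_distrib power_mult[symmetric] mult.commute[of c 2]) (simp add: power_mult)
    also have "(9 * 16 ^ c :: real) ^ r = 9 ^ r * 16 ^ (r * c)"
      by (simp add: power_mult_distrib power_mult mult.commute)
    finally show ?thesis .
  qed
  finally have b1: "(1 + 2 * 4 ^ c :: real) ^ (2*r) \<le> 9 ^ r * 16 ^ (r * c)" .
  define W where "W = (36::real) ^ r * 16 ^ (r * c)"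
  have W1: "1 \<le> W"
  proof -
    have "(1::real) \<le> 36 ^ r" "(1::real) \<le> 16 ^ (r * c)" by (rule one_le_power, simp)+
    then have "(1::real) * 1 \<le> 36 ^ r * 16 ^ (r * c)" by (intro mult_mono) auto
    then show ?thesis unfolding W_def by simp
  qed
  have hp: "0 \<le> 4 * (2 * real h)" by simp
  have "(2::real) ^ h \<le> 2 + 4 * (2 * real h) * (4 ^ r * (1 + 2 * 4 ^ c) ^ (2*r))"
    using mi unfolding len c_def[symmetric] .
  also have "\<dots> \<le> 2 + 4 * (2 * real h) * (4 ^ r * (9 ^ r * 16 ^ (r * c)))"
    by (intro add_left_mono mult_left_mono hp b1) simp_all
  also have "\<dots> = 2 + 8 * real h * W" unfolding W_def by (simp add: power_mult_distrib[symmetric] mult_ac)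
  also have "\<dots> \<le> 10 * real h * W"
  proof -
    have "1 * 1 \<le> real h * W" using h1 W1 by (intro mult_mono) auto
    then show ?thesis by (simp add: algebra_simps)
  qed
  finally have main: "(2::real) ^ h \<le> 10 * real h * W" .
  have W0: "0 < W" using W1 by simp
  have hpos: "0 < real h" using h1 by simp
  have "real h * ln 2 \<le> ln (10 * real h * W)"
  proof -
    have "real h * ln 2 = ln ((2::real) ^ h)" by (simp add: ln_realpow)
    also have "\<dots> \<le> ln (10 * real h * W)" using main hpos W0 by (subst ln_le_cancel_iff) simp_all
    finally show ?thesis .
  qed
  also have "ln (10 * real h * W) = ln (10 * real h) + real r * ln 36 + real r * real c * ln 16"
  proof -
    have "ln (10 * real h * W) = ln (10 * real h) + ln W" using hpos W0 by (simp add: ln_mult)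
    moreover have "ln W = real r * ln 36 + real r * real c * ln 16"
      unfolding W_def by (simp add: ln_mult ln_realpow)
    ultimately show ?thesis by simp
  qed
  finally have lnb: "real h * ln 2 - ln (10 * real h) - real r * ln 36 \<le> real r * real c * ln 16" by simp
  have "Xp n \<le> real h * ln 2 - ln (10 * real h) - real r * ln 36"
  proof -
    have "(real n / 8 - 1) * ln 2 \<le> real h * ln 2" using hlow by (simp add: mult_right_mono)
    moreover have "ln (10 * real h) \<le> ln (10 * real n)" using hn h1 by simp
    moreover have "real r * ln 36 \<le> (L + 1) * ln 36" using rR by (simp add: mult_right_mono)
    ultimately show ?thesis unfolding Xp_def L_def by linarith
  qed
  with lnb have Xc: "Xp n \<le> real r * real c * ln 16" by linarith
  have "gg n = Xp n / ((L + 1) * ln 16)" unfolding gg_def L_def ..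
  also have "\<dots> \<le> Xp n / (real r * ln 16)"
    using X0 r0 rR by (intro divide_left_mono mult_right_mono mult_pos_pos) auto
  also have "\<dots> \<le> real c" using Xc r0 by (simp add: divide_le_eq mult_ac)
  finally show ?thesis unfolding c_def .
qed

theorem theorem6p12:
  shows "(\<lambda>n. real (BQC n (MAJ n))) \<in> \<Omega>(\<lambda>n. real n / ln (real n))"
proof -
  have 1: "(\<lambda>n::nat. real n / ln (real n)) \<in> O(gg)"
    unfolding gg_def Xp_def by real_asymp
  have lim: "filterlim Xp at_top at_top"
    unfolding Xp_def by real_asymp
  have ev0: "eventually (\<lambda>n. 0 \<le> Xp n) at_top"
    using lim unfolding filterlim_at_top by blast
  have ev16: "eventually (\<lambda>n::nat. 16 \<le> n) at_top" by (rule eventually_ge_at_top)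
  have "eventually (\<lambda>n. norm (gg n) \<le> 1 * norm (real (BQC n (MAJ n)))) at_top"
    using ev0 ev16
  proof eventually_elim
    case (elim n)
    have gg0: "0 \<le> gg n"
    proof -
      have "0 \<le> ln (4 * real n)" using elim(2) by simp
      then have "0 < (ln (4 * real n) / ln (9/8) + 1) * ln 16" by (simp add: add_nonneg_pos)
      then show ?thesis unfolding gg_def using elim(1) by simp
    qed
    then show ?case using per_n[OF elim(2) elim(1)] by simp
  qed
  then have 2: "gg \<in> O(\<lambda>n. real (BQC n (MAJ n)))" by (rule bigoI)
  have "(\<lambda>n::nat. real n / ln (real n)) \<in> O(\<lambda>n. real (BQC n (MAJ n)))"
    by (rule landau_o.big_trans[OF 1 2])
  then show ?thesis by (simp add: bigomega_iff_bigo)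
qed

end
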